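(* Let $p\ge0$, $\Omega,K>0$, $S\in\mathcal B_{\Omega,K}$, and for $x\in[0,\pi]$ let $\psi(x)=(E+\tilde H(x))^{-1}\tilde\psi(x)\in m$ and $g(x)=\tilde Q(x)T^{-1}\psi(x)$. Then for each $x\in[0,\pi]$, $n\ge1$, $i\in\{0,1\}$, with $C$ depending only on $p,\Omega,K$: (1) $|\psi_{ni}(x)|\le C$; (2) $|g_{ni}(x)|\le C$; (3) $\{g_{ni}(x)\}\in l_2$ and $\|\{g_{ni}(x)\}\|_{l_2}\le C$; (4) $\{g_{n0}(x)-g_{n1}(x)\}_{n\ge1}\in l_1$ and $\sum_n|g_{n0}(x)-g_{n1}(x)|\le C$.
   Context: $\mathcal S_p$: collections $S=\{\lambda_n,\alpha_n\}_{n\ge1}$ of complex numbers with $\rho_n:=\sqrt{\lambda_n}$ ($\arg\rho_n\in[-\pi/2,\pi/2)$), $\rho_n=n-p-1+\varkappa_n$, $\alpha_n=2/\pi+\kappa_n$, $\{\varkappa_n\},\{\kappa_n\}\in l_2$. Model data: $\tilde\rho_n=0$ for $n\le p+1$, $\tilde\rho_n=n-p-1$ for $n\ge p+1$, $\tilde\lambda_n=\tilde\rho_n^2$; $\tilde\alpha_1=1/\pi$, $\tilde\alpha_n=0$ for $2\le n\le p+1$, $\tilde\alpha_n=2/\pi$ for $n\ge p+2$. $\xi_n=|\rho_n-\tilde\rho_n|+|\alpha_n-\tilde\alpha_n|$, $\mathcal B_\Omega=\{S\in\mathcal S_p:(\sum\xi_n^2)^{1/2}\le\Omega\}$. Notation: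 $\lambda_{n0}=\lambda_n,\rho_{n0}=\rho_n,\alpha_{n0}=\alpha_n$, $\lambda_{n1}=\tilde\lambda_n,\rho_{n1}=\tilde\rho_n,\alpha_{n1}=\tilde\alpha_n$, $\hat\rho_n=\rho_n-\tilde\rho_n$; $\tilde\varphi_{ni}(x)=\cos(\rho_{ni}x)$; $\tilde D(x,\lambda,\mu)=\int_0^x\cos(\sqrt\lambda t)\cos(\sqrt\mu t)dt$; $\tilde Q_{ni,kj}(x)=\alpha_{kj}\tilde D(x,\rho_{ni}^2,\rho_{kj}^2)$; $\tilde Q_{nk}=\begin{pmatrix}\tilde Q_{n0,k0}&-\tilde Q_{n0,k1}\\ \tilde Q_{n1,k0}&-\tilde Q_{n1,k1}\end{pmatrix}$; $T_k^{-1}=\begin{pmatrix}\hat\rho_k&1\\0&1\end{pmatrix}$; for $\hat\rho_n\neq0$, $T_n=\begin{pmatrix}\hat\rho_n^{-1}&-\hat\rho_n^{-1}\\0&1\end{pmatrix}$. $\tilde\psi_n=T_n(\tilde\varphi_{n0},\tilde\varphi_{n1})^T$ if $\hat\rho_n\ne0$, $\tilde\psi_n=(-x\sin(\rho_{n1}x),\cos(\rho_{n1}x))^T$ if $\hat\rho_n=0$; $\tilde\psi=(\tilde\psi_n)_{n\ge1}$. $\tilde H_{nk}=T_n\tilde Q_{nk}T_k^{-1}$ if $\hat\rho_n\neq0$; $\tilde H_{nk}=\begin{pmatrix}\partial_\rho[\alpha_{k0}\tilde D(x,\rho^2,\lambda_{k0})]_{\rho=\rho_{n0}}&-\partial_\rho[\alpha_{k1}\tilde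 D(x,\rho^2,\lambda_{k1})]_{\rho=\rho_{n0}}\\ \tilde Q_{n1,k0}&-\tilde Q_{n1,k1}\end{pmatrix}T_k^{-1}$ if $\hat\rho_n=0$. $m$: Banach space of bounded sequences $(a_{ni})_{n\ge1,i=0,1}$ with sup norm; $(\tilde H(x)a)_n=\sum_k\tilde H_{nk}(x)a_k$; $E$ identity; for $f\in m$, $(T^{-1}f)_n=(\hat\rho_nf_{n0}+f_{n1},f_{n1})^T$, $(\tilde Q(x)T^{-1}f)_n=\sum_k\tilde Q_{nk}(x)T_k^{-1}f_k$. $\mathcal B_{\Omega,K}=\{S\in\mathcal B_\Omega:$ for every $x\in[0,\pi]$, $E+\tilde H(x)$ is invertible on $m$ and $\|(E+\tilde H(x))^{-1}\|_{m\to m}\le K\}$. *)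

theory Defs
  imports "HOL-Analysis.Analysis"
begin

text \<open>A data collection S is a pair of sequences lam, al :: nat => complex,
  only the values at indices n >= 1 matter. Elements of the space m are functions
  a :: nat => nat => complex, a n i for n >= 1, i in {0,1}, vanishing at all other indices.
  2x2 matrices are functions nat => nat => complex with indices 0,1.\<close>

definition psqrt :: "complex \<Rightarrow> complex" where
  "psqrt z = (if Re (csqrt z) = 0 then - csqrt z else csqrt z)"

definition rho :: "(nat \<Rightarrow> complex) \<Rightarrow> nat \<Rightarrow> complex" where
  "rho lam n = psqrt (lam n)"

definition rhot :: "nat \<Rightarrow> nat \<Rightarrow> complex" where
  "rhot p n = (if n \<le> p + 1 then 0 else of_nat n - of_nat p - 1)"

definition alphat :: "nat \<Rightarrow> nat \<Rightarrow> complex" where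
  "alphat p n = (if n = 1 then 1 / of_real pi else if n \<le> p + 1 then 0 else 2 / of_real pi)"

definition Sp :: "nat \<Rightarrow> (nat \<Rightarrow> complex) \<Rightarrow> (nat \<Rightarrow> complex) \<Rightarrow> bool" where
  "Sp p lam al \<longleftrightarrow>
     summable (\<lambda>n. (cmod (rho lam (Suc n) - (of_nat (Suc n) - of_nat p - 1)))\<^sup>2) \<and>
     summable (\<lambda>n. (cmod (al (Suc n) - 2 / of_real pi))\<^sup>2)"

definition xi :: "nat \<Rightarrow> (nat \<Rightarrow> complex) \<Rightarrow> (nat \<Rightarrow> complex) \<Rightarrow> nat \<Rightarrow> real" where
  "xi p lam al n = cmod (rho lam n - rhot p n) + cmod (al n - alphat p n)"

definition BOmega :: "nat \<Rightarrow> real \<Rightarrow> (nat \<Rightarrow> complex) \<Rightarrow> (nat \<Rightarrow> complex) \<Rightarrow> bool" where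
  "BOmega p \<Omega> lam al \<longleftrightarrow> Sp p lam al \<and>
     summable (\<lambda>n. (xi p lam al (Suc n))\<^sup>2) \<and>
     sqrt (\<Sum>n. (xi p lam al (Suc n))\<^sup>2) \<le> \<Omega>"

text \<open>rho_{n0} = rho_n, rho_{n1} = rhot_n, similarly alpha; rhohat_n = rho_n - rhot_n.\<close>
definition rhoi :: "nat \<Rightarrow> (nat \<Rightarrow> complex) \<Rightarrow> nat \<Rightarrow> nat \<Rightarrow> complex" where
  "rhoi p lam n i = (if i = 0 then rho lam n else rhot p n)"

definition alphai :: "nat \<Rightarrow> (nat \<Rightarrow> complex) \<Rightarrow> nat \<Rightarrow> nat \<Rightarrow> complex" where
  "alphai p al n i = (if i = 0 then al n else alphat p n)"

definition rhohat :: "nat \<Rightarrow> (nat \<Rightarrow> complex) \<Rightarrow> nat \<Rightarrow> complex" where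
  "rhohat p lam n = rho lam n - rhot p n"

text \<open>Dr x r s = int_0^x cos(r t) cos(s t) dt, so that
  Dtilde(x, r^2, s^2) = Dr x r s for any square roots r, s (cos is even).\<close>
definition Dr :: "real \<Rightarrow> complex \<Rightarrow> complex \<Rightarrow> complex" where
  "Dr x r s = integral {0..x} (\<lambda>t. cos (r * of_real t) * cos (s * of_real t))"

definition mmul :: "(nat \<Rightarrow> nat \<Rightarrow> complex) \<Rightarrow> (nat \<Rightarrow> nat \<Rightarrow> complex) \<Rightarrow> nat \<Rightarrow> nat \<Rightarrow> complex" where
  "mmul A B i j = (\<Sum>l<2. A i l * B l j)"

definition Qe :: "nat \<Rightarrow> (nat \<Rightarrow> complex) \<Rightarrow> (nat \<Rightarrow> complex) \<Rightarrow> real \<Rightarrow> nat \<Rightarrow> nat \<Rightarrow> nat \<Rightarrow> nat \<Rightarrow> complex" where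
  "Qe p lam al x n i k j = alphai p al k j * Dr x (rhoi p lam n i) (rhoi p lam k j)"

definition Qm :: "nat \<Rightarrow> (nat \<Rightarrow> complex) \<Rightarrow> (nat \<Rightarrow> complex) \<Rightarrow> real \<Rightarrow> nat \<Rightarrow> nat \<Rightarrow> nat \<Rightarrow> nat \<Rightarrow> complex" where
  "Qm p lam al x n k i j = (if j = 0 then 1 else -1) * Qe p lam al x n i k j"

definition Tinv :: "nat \<Rightarrow> (nat \<Rightarrow> complex) \<Rightarrow> nat \<Rightarrow> nat \<Rightarrow> nat \<Rightarrow> complex" where
  "Tinv p lam k i j = (if i = 0 then (if j = 0 then rhohat p lam k else 1) else (if j = 0 then 0 else 1))"

definition Tm :: "nat \<Rightarrow> (nat \<Rightarrow> complex) \<Rightarrow> nat \<Rightarrow> nat \<Rightarrow> nat \<Rightarrow> complex" where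
  "Tm p lam n i j = (if i = 0 then (if j = 0 then 1 / rhohat p lam n else - 1 / rhohat p lam n)
                     else (if j = 0 then 0 else 1))"

definition Hd :: "nat \<Rightarrow> (nat \<Rightarrow> complex) \<Rightarrow> (nat \<Rightarrow> complex) \<Rightarrow> real \<Rightarrow> nat \<Rightarrow> nat \<Rightarrow> nat \<Rightarrow> nat \<Rightarrow> complex" where
  "Hd p lam al x n k i j =
     (if i = 0 then (if j = 0 then 1 else -1) *
          deriv (\<lambda>r. alphai p al k j * Dr x r (rhoi p lam k j)) (rho lam n)
      else Qm p lam al x n k i j)"

definition Hm :: "nat \<Rightarrow> (nat \<Rightarrow> complex) \<Rightarrow> (nat \<Rightarrow> complex) \<Rightarrow> real \<Rightarrow> nat \<Rightarrow> nat \<Rightarrow> nat \<Rightarrow> nat \<Rightarrow> complex" where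
  "Hm p lam al x n k =
     (if rhohat p lam n \<noteq> 0 then mmul (Tm p lam n) (mmul (Qm p lam al x n k) (Tinv p lam k))
      else mmul (Hd p lam al x n k) (Tinv p lam k))"

definition psit :: "nat \<Rightarrow> (nat \<Rightarrow> complex) \<Rightarrow> real \<Rightarrow> nat \<Rightarrow> nat \<Rightarrow> complex" where
  "psit p lam x n i =
     (if n \<ge> 1 \<and> i \<le> 1 then
        (if rhohat p lam n \<noteq> 0 then
           (\<Sum>j<2. Tm p lam n i j * cos (rhoi p lam n j * of_real x))
         else if i = 0 then - of_real x * sin (rhot p n * of_real x)
         else cos (rhot p n * of_real x))
      else 0)"

text \<open>The Banach space m (sup norm), represented as bounded arrays vanishing off n>=1, i<=1.\<close>
definition msp :: "(nat \<Rightarrow> nat \<Rightarrow> complex) set" where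
  "msp = {a. (\<forall>n i. (n = 0 \<or> i > 1) \<longrightarrow> a n i = 0) \<and> (\<exists>B. \<forall>n i. cmod (a n i) \<le> B)}"

definition Hop :: "nat \<Rightarrow> (nat \<Rightarrow> complex) \<Rightarrow> (nat \<Rightarrow> complex) \<Rightarrow> real \<Rightarrow>
                   (nat \<Rightarrow> nat \<Rightarrow> complex) \<Rightarrow> nat \<Rightarrow> nat \<Rightarrow> complex" where
  "Hop p lam al x a n i =
     (if n \<ge> 1 \<and> i \<le> 1 then (\<Sum>k. \<Sum>j<2. Hm p lam al x n (Suc k) i j * a (Suc k) j) else 0)"

definition Aop :: "nat \<Rightarrow> (nat \<Rightarrow> complex) \<Rightarrow> (nat \<Rightarrow> complex) \<Rightarrow> real \<Rightarrow>
                   (nat \<Rightarrow> nat \<Rightarrow> complex) \<Rightarrow> nat \<Rightarrow> nat \<Rightarrow> complex" where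
  "Aop p lam al x a = (\<lambda>n i. a n i + Hop p lam al x a n i)"

text \<open>B_{Omega,K}: E + Htilde(x) is a well-defined operator on m, bijective on m,
  and its inverse has operator norm (w.r.t. the sup norm) at most K.\<close>
definition BOK :: "nat \<Rightarrow> real \<Rightarrow> real \<Rightarrow> (nat \<Rightarrow> complex) \<Rightarrow> (nat \<Rightarrow> complex) \<Rightarrow> bool" where
  "BOK p \<Omega> K lam al \<longleftrightarrow> BOmega p \<Omega> lam al \<and>
     (\<forall>x\<in>{0..pi}.
        (\<forall>a\<in>msp. \<forall>n i. n \<ge> 1 \<longrightarrow> i \<le> 1 \<longrightarrow>
            summable (\<lambda>k. \<Sum>j<2. Hm p lam al x n (Suc k) i j * a (Suc k) j)) \<and>
        bij_betw (Aop p lam al x) msp msp \<and>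
        (\<forall>f\<in>msp. \<forall>B. (\<forall>n i. cmod (f n i) \<le> B) \<longrightarrow>
            (\<forall>n i. cmod (the_inv_into msp (Aop p lam al x) f n i) \<le> K * B)))"

definition psi :: "nat \<Rightarrow> (nat \<Rightarrow> complex) \<Rightarrow> (nat \<Rightarrow> complex) \<Rightarrow> real \<Rightarrow> nat \<Rightarrow> nat \<Rightarrow> complex" where
  "psi p lam al x = the_inv_into msp (Aop p lam al x) (psit p lam x)"

definition gterm :: "nat \<Rightarrow> (nat \<Rightarrow> complex) \<Rightarrow> (nat \<Rightarrow> complex) \<Rightarrow> real \<Rightarrow> nat \<Rightarrow> nat \<Rightarrow> nat \<Rightarrow> complex" where
  "gterm p lam al x n i k =
     (\<Sum>j<2. Qm p lam al x n k i j * (\<Sum>l<2. Tinv p lam k j l * psi p lam al x k l))"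

definition g :: "nat \<Rightarrow> (nat \<Rightarrow> complex) \<Rightarrow> (nat \<Rightarrow> complex) \<Rightarrow> real \<Rightarrow> nat \<Rightarrow> nat \<Rightarrow> complex" where
  "g p lam al x n i = (\<Sum>k. gterm p lam al x n i (Suc k))"

end

theory Submission
  imports Defs
begin

lemma cos_bnd: fixes z :: complex assumes "\<bar>Im z\<bar> \<le> Y" shows "cmod (cos z) \<le> exp Y"
  using cmod_cos_le_exp[of 1 z] assms by simp (meson exp_le_cancel_iff order_trans)

lemma sin_bnd: fixes z :: complex assumes "\<bar>Im z\<bar> \<le> Y" shows "cmod (sin z) \<le> exp Y"
  using cmod_sin_le_exp[of 1 z] assms by simp (meson exp_le_cancel_iff order_trans)

lemma strip_convex: "convex {u::complex. \<bar>Im u\<bar> \<le> Y}"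
proof -
  have "{u::complex. \<bar>Im u\<bar> \<le> Y} = {u. Im u \<le> Y} \<inter> {u. Im u \<ge> -Y}" by auto
  then show ?thesis using convex_Int[OF convex_halfspace_Im_le convex_halfspace_Im_ge] by metis
qed

lemma cos_lip:
  fixes z w :: complex assumes "\<bar>Im z\<bar> \<le> Y" "\<bar>Im w\<bar> \<le> Y"
  shows "cmod (cos z - cos w) \<le> exp Y * cmod (z - w)"
proof -
  let ?f = "\<lambda>(i::nat) u. if i = 0 then cos u else - sin u"
  have d: "\<And>i x. x \<in> {u. \<bar>Im u\<bar> \<le> Y} \<Longrightarrow> i \<le> 0 \<Longrightarrow> (?f i has_field_derivative ?f (Suc i) x) (at x within {u. \<bar>Im u\<bar> \<le> Y})"
    by (auto intro!: derivative_eq_intros)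
  have b: "\<And>x. x \<in> {u. \<bar>Im u\<bar> \<le> Y} \<Longrightarrow> cmod (?f (Suc 0) x) \<le> exp Y"
    by (auto intro: sin_bnd)
  have "cmod (?f 0 z - (\<Sum>i\<le>0. ?f i w * (z-w) ^ i / fact i)) \<le> exp Y * cmod (z - w) ^ Suc 0 / fact 0"
    by (rule complex_Taylor[OF strip_convex d b]) (use assms in auto)
  then show ?thesis by simp
qed

lemma cos_tay:
  fixes z w :: complex assumes "\<bar>Im z\<bar> \<le> Y" "\<bar>Im w\<bar> \<le> Y"
  shows "cmod (cos z - cos w + sin w * (z - w)) \<le> exp Y * cmod (z - w)^2"
proof -
  let ?f = "\<lambda>(i::nat) u. if i = 0 then cos u else if i = 1 then - sin u else - cos u"
  have d: "\<And>i x. x \<in> {u. \<bar>Im u\<bar> \<le> Y} \<Longrightarrow> i \<le> 1 \<Longrightarrow> (?f i has_field_derivative ?f (Suc i) x) (at x within {u. \<bar>Im u\<bar> \<le> Y})"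
    subgoal for i x by (cases "i = 0") (auto intro!: derivative_eq_intros)
    done
  have b: "\<And>x. x \<in> {u. \<bar>Im u\<bar> \<le> Y} \<Longrightarrow> cmod (?f (Suc 1) x) \<le> exp Y"
    by (auto intro: cos_bnd)
  have "cmod (?f 0 z - (\<Sum>i\<le>1. ?f i w * (z-w) ^ i / fact i)) \<le> exp Y * cmod (z - w) ^ Suc 1 / fact 1"
    by (rule complex_Taylor[OF strip_convex d b]) (use assms in auto)
  then show ?thesis by (simp add: algebra_simps power2_eq_square)
qed

lemma int_cos_int:
  fixes k :: int assumes "k \<noteq> 0"
  shows "((\<lambda>t. cos (of_int k * t)) has_integral 0) {0..pi}"
proof -
  have "((\<lambda>t. cos (of_int k * t)) has_integral (sin (of_int k * pi) / of_int k - sin (of_int k * 0) / of_int k)) {0..pi}"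
    apply (rule fundamental_theorem_of_calculus)
     apply simp
    apply (subst has_real_derivative_iff_has_vector_derivative[symmetric])
    using assms by (auto intro!: derivative_eq_intros)
  then show ?thesis by (simp add: mult.commute)
qed

lemma int_cos_int0:
  fixes k :: int
  shows "integral {0..pi} (\<lambda>t. cos (of_int k * t)) = (if k = 0 then pi else 0)"
  using int_cos_int[of k] by (auto intro: integral_unique)

lemma cos_cont[continuous_intros]: "continuous_on S (\<lambda>t::real. cos (a * t))"
  by (intro continuous_intros)

lemma ortho_cos:
  fixes m m' :: nat assumes "m \<ge> 1" "m' \<ge> 1"
  shows "integral {0..pi} (\<lambda>t. cos (real m * t) * cos (real m' * t)) = (if m = m' then pi/2 else 0)"
proof -
  have e: "cos (real m * t) * cos (real m' * t) = cos (of_int (int m - int m') * t) / 2 + cos (of_int (int m + int m') * t) / 2" for t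
    by (simp add: cos_diff cos_add algebra_simps add_divide_distrib[symmetric] diff_divide_distrib[symmetric])
  have i1: "(\<lambda>t. cos (of_int k * t) / 2) integrable_on {0..pi}" for k :: int
    by (intro integrable_continuous_interval continuous_intros) auto
  have "integral {0..pi} (\<lambda>t. cos (real m * t) * cos (real m' * t)) =
     integral {0..pi} (\<lambda>t. cos (of_int (int m - int m') * t)) / 2 + integral {0..pi} (\<lambda>t. cos (of_int (int m + int m') * t)) / 2"
    unfolding e by (subst integral_add[OF i1 i1]) simp
  also have "... = (if m = m' then pi else 0) / 2 + 0 / 2"
    unfolding int_cos_int0 using assms by simp
  finally show ?thesis by (cases "m = m'") auto
qed

lemma ortho_sin:
  fixes m m' :: nat assumes "m \<ge> 1" "m' \<ge> 1"
  shows "integral {0..pi} (\<lambda>t. sin (real m * t) * sin (real m' * t)) = (if m = m' then pi/2 else 0)"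
proof -
  have e: "sin (real m * t) * sin (real m' * t) = cos (of_int (int m - int m') * t) / 2 - cos (of_int (int m + int m') * t) / 2" for t
    by (simp add: cos_diff cos_add algebra_simps add_divide_distrib[symmetric] diff_divide_distrib[symmetric])
  have i1: "(\<lambda>t. cos (of_int k * t) / 2) integrable_on {0..pi}" for k :: int
    by (intro integrable_continuous_interval continuous_intros) auto
  have "integral {0..pi} (\<lambda>t. sin (real m * t) * sin (real m' * t)) =
     integral {0..pi} (\<lambda>t. cos (of_int (int m - int m') * t)) / 2 - integral {0..pi} (\<lambda>t. cos (of_int (int m + int m') * t)) / 2"
    unfolding e by (subst integral_diff[OF i1 i1]) simp
  also have "... = (if m = m' then pi else 0) / 2 - 0 / 2"
    unfolding int_cos_int0 using assms by simp
  finally show ?thesis by (cases "m = m'") auto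
qed


lemma ortho_real:
  fixes \<phi> :: "'i \<Rightarrow> real \<Rightarrow> real"
  assumes I: "finite I"
    and orth: "\<And>m m'. m \<in> I \<Longrightarrow> m' \<in> I \<Longrightarrow> integral {0..pi} (\<lambda>t. \<phi> m t * \<phi> m' t) = (if m = m' then pi/2 else 0)"
    and cont: "\<And>m. m \<in> I \<Longrightarrow> continuous_on {0..pi} (\<phi> m)"
  shows "integral {0..pi} (\<lambda>t. (\<Sum>m\<in>I. a m * \<phi> m t)\<^sup>2) = pi/2 * (\<Sum>m\<in>I. (a m)\<^sup>2)"
proof -
  have e: "(\<Sum>m\<in>I. a m * \<phi> m t)\<^sup>2 = (\<Sum>m\<in>I. \<Sum>m'\<in>I. (a m * a m') * (\<phi> m t * \<phi> m' t))" for t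
    by (simp add: power2_eq_square sum_product algebra_simps)
  have ii: "m \<in> I \<Longrightarrow> m' \<in> I \<Longrightarrow> (\<lambda>t. (a m * a m') * (\<phi> m t * \<phi> m' t)) integrable_on {0..pi}" for m m'
    by (intro integrable_continuous_interval continuous_intros cont)
  have i2: "m \<in> I \<Longrightarrow> (\<lambda>t. \<Sum>m'\<in>I. (a m * a m') * (\<phi> m t * \<phi> m' t)) integrable_on {0..pi}" for m
    by (intro integrable_continuous_interval continuous_intros cont)
  have "integral {0..pi} (\<lambda>t. (\<Sum>m\<in>I. a m * \<phi> m t)\<^sup>2) =
      (\<Sum>m\<in>I. \<Sum>m'\<in>I. (a m * a m') * integral {0..pi} (\<lambda>t. \<phi> m t * \<phi> m' t))"
    unfolding e by (simp add: integral_sum[OF I i2] integral_sum[OF I ii])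
  also have "... = (\<Sum>m\<in>I. \<Sum>m'\<in>I. (if m = m' then (a m * a m') * (pi/2) else 0))"
    by (intro sum.cong refl) (simp add: orth)
  also have "... = (\<Sum>m\<in>I. (a m)\<^sup>2 * (pi/2))"
    by (intro sum.cong refl) (simp add: power2_eq_square I)
  finally show ?thesis by (simp add: sum_distrib_left sum_distrib_right algebra_simps)
qed

lemma ortho_cplx:
  fixes \<phi> :: "'i \<Rightarrow> real \<Rightarrow> real"
  assumes I: "finite I"
    and orth: "\<And>m m'. m \<in> I \<Longrightarrow> m' \<in> I \<Longrightarrow> integral {0..pi} (\<lambda>t. \<phi> m t * \<phi> m' t) = (if m = m' then pi/2 else 0)"
    and cont: "\<And>m. m \<in> I \<Longrightarrow> continuous_on {0..pi} (\<phi> m)"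
  shows "integral {0..pi} (\<lambda>t. (cmod (\<Sum>m\<in>I. c m * of_real (\<phi> m t)))\<^sup>2) = pi/2 * (\<Sum>m\<in>I. (cmod (c m))\<^sup>2)"
proof -
  have e: "(cmod (\<Sum>m\<in>I. c m * of_real (\<phi> m t)))\<^sup>2 = (\<Sum>m\<in>I. Re (c m) * \<phi> m t)\<^sup>2 + (\<Sum>m\<in>I. Im (c m) * \<phi> m t)\<^sup>2" for t
    by (simp add: cmod_power2 Re_sum Im_sum)
  have i: "(\<lambda>t. (\<Sum>m\<in>I. b m * \<phi> m t)\<^sup>2) integrable_on {0..pi}" for b
    by (intro integrable_continuous_interval continuous_intros cont)
  have r1: "integral {0..pi} (\<lambda>t. (\<Sum>m\<in>I. Re (c m) * \<phi> m t)\<^sup>2) = pi/2 * (\<Sum>m\<in>I. (Re (c m))\<^sup>2)"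
    by (rule ortho_real[OF I orth cont])
  have r2: "integral {0..pi} (\<lambda>t. (\<Sum>m\<in>I. Im (c m) * \<phi> m t)\<^sup>2) = pi/2 * (\<Sum>m\<in>I. (Im (c m))\<^sup>2)"
    by (rule ortho_real[OF I orth cont])
  show ?thesis
    unfolding e integral_add[OF i i] r1 r2
    by (simp add: cmod_power2 sum.distrib algebra_simps)
qed

lemma bessel:
  fixes \<phi> :: "'i \<Rightarrow> real \<Rightarrow> real" and G :: "real \<Rightarrow> complex"
  assumes I: "finite I"
    and orth: "\<And>m m'. m \<in> I \<Longrightarrow> m' \<in> I \<Longrightarrow> integral {0..pi} (\<lambda>t. \<phi> m t * \<phi> m' t) = (if m = m' then pi/2 else 0)"
    and cont: "\<And>m. m \<in> I \<Longrightarrow> continuous_on {0..pi} (\<phi> m)"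
    and x: "0 \<le> x" "x \<le> pi" and G: "continuous_on {0..pi} G"
  shows "(\<Sum>m\<in>I. (cmod (integral {0..x} (\<lambda>t. of_real (\<phi> m t) * G t)))\<^sup>2)
          \<le> pi/2 * integral {0..pi} (\<lambda>t. (cmod (G t))\<^sup>2)"
proof -
  define c where "c m = integral {0..x} (\<lambda>t. of_real (\<phi> m t) * G t)" for m
  define T where "T = (\<Sum>m\<in>I. (cmod (c m))\<^sup>2)"
  define S where "S t = (\<Sum>m\<in>I. cnj (c m) * of_real (\<phi> m t))" for t
  have sub: "{0..x} \<subseteq> {0..pi}" using x by auto
  have contS: "continuous_on {0..pi} S" unfolding S_def
    by (intro continuous_intros cont)
  have ci: "m \<in> I \<Longrightarrow> (\<lambda>t. cnj (c m) * (of_real (\<phi> m t) * G t)) integrable_on {0..x}" for m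
    by (intro integrable_continuous_interval continuous_intros continuous_on_subset[OF cont sub] continuous_on_subset[OF G sub])
  have "of_real T = (\<Sum>m\<in>I. cnj (c m) * c m)"
    unfolding T_def of_real_sum
    by (intro sum.cong refl) (metis complex_norm_square mult.commute)
  also have "... = (\<Sum>m\<in>I. integral {0..x} (\<lambda>t. cnj (c m) * (of_real (\<phi> m t) * G t)))"
    by (simp add: c_def)
  also have "... = integral {0..x} (\<lambda>t. \<Sum>m\<in>I. cnj (c m) * (of_real (\<phi> m t) * G t))"
    by (rule integral_sum[OF I ci, symmetric])
  also have "... = integral {0..x} (\<lambda>t. S t * G t)"
    unfolding S_def sum_distrib_right by (simp add: algebra_simps)
  finally have Teq: "of_real T = integral {0..x} (\<lambda>t. S t * G t)" .
  have iSG: "(\<lambda>t. S t * G t) integrable_on {0..x}"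
    by (intro integrable_continuous_interval continuous_intros continuous_on_subset[OF contS sub] continuous_on_subset[OF G sub])
  have iSG2: "(\<lambda>t. cmod (S t) * cmod (G t)) integrable_on {0..x}"
    by (intro integrable_continuous_interval continuous_intros continuous_on_subset[OF contS sub] continuous_on_subset[OF G sub])
  have iS2: "(\<lambda>t. (cmod (S t))\<^sup>2) integrable_on {0..r}" if "r \<le> pi" for r
    by (intro integrable_continuous_interval continuous_intros continuous_on_subset[OF contS] ) (use that in auto)
  have iG2: "(\<lambda>t. (cmod (G t))\<^sup>2) integrable_on {0..r}" if "r \<le> pi" for r
    by (intro integrable_continuous_interval continuous_intros continuous_on_subset[OF G] ) (use that in auto)
  have "T \<ge> 0" unfolding T_def by (simp add: sum_nonneg)
  then have "T = cmod (of_real T)" by simp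
  also have "... \<le> integral {0..x} (\<lambda>t. cmod (S t) * cmod (G t))"
    unfolding Teq by (rule integral_norm_bound_integral[OF iSG iSG2]) (simp add: norm_mult)
  also have "... \<le> integral {0..x} (\<lambda>t. (cmod (S t))\<^sup>2 / pi + pi / 4 * (cmod (G t))\<^sup>2)"
  proof (rule integral_le[OF iSG2])
    show "(\<lambda>t. (cmod (S t))\<^sup>2 / pi + pi / 4 * (cmod (G t))\<^sup>2) integrable_on {0..x}"
      using iS2[OF x(2)] iG2[OF x(2)] by (intro integrable_add integrable_on_divide integrable_on_mult_right) 
    fix t
    have "0 \<le> (2 * cmod (S t) - pi * cmod (G t))\<^sup>2" by simp
    then have "4 * pi * (cmod (S t) * cmod (G t)) \<le> 4 * (cmod (S t))\<^sup>2 + pi\<^sup>2 * (cmod (G t))\<^sup>2"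
      by (simp add: power2_eq_square algebra_simps)
    then show "cmod (S t) * cmod (G t) \<le> (cmod (S t))\<^sup>2 / pi + pi / 4 * (cmod (G t))\<^sup>2"
      using pi_gt_zero by (simp add: field_simps power2_eq_square)
  qed
  also have "... = integral {0..x} (\<lambda>t. (cmod (S t))\<^sup>2) / pi + pi / 4 * integral {0..x} (\<lambda>t. (cmod (G t))\<^sup>2)"
    using iS2[OF x(2)] iG2[OF x(2)] by (subst integral_add) (auto intro: integrable_on_divide integrable_on_mult_right)
  also have "... \<le> integral {0..pi} (\<lambda>t. (cmod (S t))\<^sup>2) / pi + pi / 4 * integral {0..pi} (\<lambda>t. (cmod (G t))\<^sup>2)"
    using integral_subset_le[OF sub iS2[OF x(2)] iS2[OF order_refl]] integral_subset_le[OF sub iG2[OF x(2)] iG2[OF order_refl]]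
    by (intro add_mono divide_right_mono mult_left_mono) auto
  also have "integral {0..pi} (\<lambda>t. (cmod (S t))\<^sup>2) = pi / 2 * T"
    unfolding S_def T_def by (subst ortho_cplx[OF I orth cont]) auto
  finally show ?thesis unfolding T_def c_def by (simp add: field_simps)
qed

definition EB :: "real \<Rightarrow> real" where "EB \<Omega> = exp (\<Omega> * pi)"
definition MB :: "real \<Rightarrow> real" where "MB \<Omega> = pi * EB \<Omega> + 1"

definition rt :: "nat \<Rightarrow> nat \<Rightarrow> real" where
  "rt p n = (if n \<le> p + 1 then 0 else real n - real p - 1)"

lemma rhot_rt: "rhot p n = of_real (rt p n)"
  by (simp add: rhot_def rt_def)

lemma rt_nat: "n \<ge> p + 2 \<Longrightarrow> rt p n = real (n - p - 1)"
  by (simp add: rt_def of_nat_diff)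

lemma rt_small: "n \<le> p + 1 \<Longrightarrow> rt p n = 0"
  by (simp add: rt_def)

locale lctx =
  fixes p :: nat and \<Omega> K :: real and lam al :: "nat \<Rightarrow> complex" and x :: real
  assumes Opos: "\<Omega> > 0" and Kpos: "K > 0" and bok: "BOK p \<Omega> K lam al" and xin: "x \<in> {0..pi}"
begin

lemma x0: "0 \<le> x" and xpi: "x \<le> pi" using xin by auto

lemma bom: "BOmega p \<Omega> lam al" using bok by (simp add: BOK_def)

lemma xi_sum: "summable (\<lambda>n. (xi p lam al (Suc n))\<^sup>2)" and xi_sqrt: "sqrt (\<Sum>n. (xi p lam al (Suc n))\<^sup>2) \<le> \<Omega>"
  using bom by (auto simp: BOmega_def)

lemma xi_nonneg: "xi p lam al n \<ge> 0" by (simp add: xi_def)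

lemma xi_suminf: "(\<Sum>n. (xi p lam al (Suc n))\<^sup>2) \<le> \<Omega>\<^sup>2"
proof -
  have "0 \<le> (\<Sum>n. (xi p lam al (Suc n))\<^sup>2)" by (intro suminf_nonneg xi_sum) simp
  then show ?thesis using xi_sqrt Opos by (metis real_sqrt_le_iff real_sqrt_pow2 sqrt_le_D)
qed

lemma xi_psum: "(\<Sum>n\<in>I. (xi p lam al (Suc n))\<^sup>2) \<le> \<Omega>\<^sup>2" if "finite I"
  using sum_le_suminf[OF xi_sum that] xi_suminf by force

lemma xi_psum1: "finite I \<Longrightarrow> I \<subseteq> {1..} \<Longrightarrow> (\<Sum>n\<in>I. (xi p lam al n)\<^sup>2) \<le> \<Omega>\<^sup>2"
proof -
  assume I: "finite I" "I \<subseteq> {1..}"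
  have "I = Suc ` ((\<lambda>n. n - 1) ` I)" using I(2) by (force simp: image_iff)
  then have "(\<Sum>n\<in>I. (xi p lam al n)\<^sup>2) = (\<Sum>n\<in>(\<lambda>n. n - 1) ` I. (xi p lam al (Suc n))\<^sup>2)"
    by (metis (no_types, lifting) inj_Suc inj_on_subset subset_UNIV sum.reindex_cong)
  also have "... \<le> \<Omega>\<^sup>2" using I by (intro xi_psum) auto
  finally show ?thesis .
qed

lemma xi_le: "n \<ge> 1 \<Longrightarrow> xi p lam al n \<le> \<Omega>"
proof -
  assume "n \<ge> 1"
  have "(xi p lam al n)\<^sup>2 \<le> \<Omega>\<^sup>2" using xi_psum1[of "{n}"] \<open>n \<ge> 1\<close> by auto
  then show ?thesis using Opos xi_nonneg by (meson abs_le_square_iff abs_of_nonneg less_le power2_le_imp_le)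
qed

abbreviation h where "h n \<equiv> rhohat p lam n"

lemma h_le_xi: "cmod (h n) \<le> xi p lam al n"
  by (simp add: xi_def rhohat_def)

lemma al_le_xi: "cmod (al n - alphat p n) \<le> xi p lam al n"
  by (simp add: xi_def)

lemma h_le: "n \<ge> 1 \<Longrightarrow> cmod (h n) \<le> \<Omega>"
  using h_le_xi xi_le order_trans by blast

lemma rho_eq: "rho lam n = of_real (rt p n) + h n"
  by (simp add: rhohat_def rhot_rt)

lemma Im_rho: "n \<ge> 1 \<Longrightarrow> \<bar>Im (rho lam n)\<bar> \<le> \<Omega>"
  using h_le[of n] abs_Im_le_cmod[of "h n"] by (simp add: rho_eq)

lemma Im_rho_t: "n \<ge> 1 \<Longrightarrow> t \<in> {0..pi} \<Longrightarrow> \<bar>Im (rho lam n * of_real t)\<bar> \<le> \<Omega> * pi"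
proof -
  assume n: "n \<ge> 1" and t: "t \<in> {0..pi}"
  have "\<bar>Im (rho lam n * of_real t)\<bar> = \<bar>Im (rho lam n)\<bar> * t" using t by (simp add: abs_mult)
  also have "... \<le> \<Omega> * pi" using Im_rho[OF n] t Opos by (intro mult_mono) auto
  finally show ?thesis .
qed

lemma EB_ge1: "EB \<Omega> \<ge> 1" using Opos by (simp add: EB_def)

lemma cos_rho_bnd: "n \<ge> 1 \<Longrightarrow> t \<in> {0..pi} \<Longrightarrow> cmod (cos (rho lam n * of_real t)) \<le> EB \<Omega>"
  unfolding EB_def by (rule cos_bnd[OF Im_rho_t])

lemma cos_real_bnd: "cmod (cos (of_real a :: complex)) \<le> 1"
  by (simp add: cos_of_real del: of_real_mult)

lemma sin_real_bnd: "cmod (sin (of_real a :: complex)) \<le> 1"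
  by (simp add: sin_of_real del: of_real_mult)

lemma cos_diff_bnd: "n \<ge> 1 \<Longrightarrow> t \<in> {0..pi} \<Longrightarrow>
   cmod (cos (rho lam n * of_real t) - cos (rhot p n * of_real t)) \<le> EB \<Omega> * pi * cmod (h n)"
proof -
  assume n: "n \<ge> 1" and t: "t \<in> {0..pi}"
  have "cmod (cos (rho lam n * of_real t) - cos (rhot p n * of_real t)) \<le> EB \<Omega> * cmod (rho lam n * of_real t - rhot p n * of_real t)"
    unfolding EB_def by (rule cos_lip[OF Im_rho_t[OF n t]]) (use Opos in \<open>simp add: rhot_rt\<close>)
  also have "rho lam n * of_real t - rhot p n * of_real t = h n * of_real t" by (simp add: rhohat_def algebra_simps)
  also have "EB \<Omega> * cmod (h n * of_real t) \<le> EB \<Omega> * pi * cmod (h n)"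
  proof -
    have "cmod (h n * of_real t) \<le> pi * cmod (h n)" using t by (simp add: norm_mult mult_right_mono mult.commute)
    then show ?thesis using EB_ge1 by (simp add: mult.assoc mult_left_mono)
  qed
  finally show ?thesis .
qed

lemma cos_tay_bnd: "n \<ge> 1 \<Longrightarrow> t \<in> {0..pi} \<Longrightarrow>
   cmod (cos (rho lam n * of_real t) - cos (rhot p n * of_real t) + h n * of_real t * sin (rhot p n * of_real t))
     \<le> EB \<Omega> * pi\<^sup>2 * (cmod (h n))\<^sup>2"
proof -
  assume n: "n \<ge> 1" and t: "t \<in> {0..pi}"
  have "cmod (cos (rho lam n * of_real t) - cos (rhot p n * of_real t) + sin (rhot p n * of_real t) * (rho lam n * of_real t - rhot p n * of_real t))
     \<le> EB \<Omega> * (cmod (rho lam n * of_real t - rhot p n * of_real t))\<^sup>2"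
    unfolding EB_def by (rule cos_tay[OF Im_rho_t[OF n t]]) (use Opos in \<open>simp add: rhot_rt\<close>)
  also have "rho lam n * of_real t - rhot p n * of_real t = h n * of_real t" by (simp add: rhohat_def algebra_simps)
  also have "EB \<Omega> * (cmod (h n * of_real t))\<^sup>2 \<le> EB \<Omega> * pi\<^sup>2 * (cmod (h n))\<^sup>2"
  proof -
    have "cmod (h n * of_real t) \<le> pi * cmod (h n)" using t by (simp add: norm_mult mult_right_mono mult.commute)
    then have "(cmod (h n * of_real t))\<^sup>2 \<le> pi\<^sup>2 * (cmod (h n))\<^sup>2" by (metis norm_ge_zero power_mono power_mult_distrib)
    then show ?thesis using EB_ge1 by (simp add: mult.assoc mult_left_mono)
  qed
  finally show ?thesis by (simp add: algebra_simps)
qed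

end

lemma sum2: "(\<Sum>j<(2::nat). f j) = f 0 + f 1" by (simp add: numeral_2_eq_2)

lemma mmul_vec: "(\<Sum>j<2. mmul A B i j * v j) = (\<Sum>l<2. A i l * (\<Sum>j<2. B l j * v j))"
  by (simp add: mmul_def sum2 algebra_simps)

context lctx begin

lemma MB_ge: "MB \<Omega> \<ge> pi * EB \<Omega>" "MB \<Omega> \<ge> 1" "MB \<Omega> \<ge> pi"
proof -
  have "pi * 1 \<le> pi * EB \<Omega>" using EB_ge1 pi_gt_zero by (intro mult_left_mono) auto
  then have "pi \<le> pi * EB \<Omega>" by simp
  moreover have "pi * EB \<Omega> \<ge> 0" using EB_ge1 pi_gt_zero by simp
  ultimately show "MB \<Omega> \<ge> pi * EB \<Omega>" "MB \<Omega> \<ge> 1" "MB \<Omega> \<ge> pi" unfolding MB_def by linarith+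
qed

lemma psit_bnd: "cmod (psit p lam x n i) \<le> MB \<Omega>"
proof (cases "n \<ge> 1 \<and> i \<le> 1")
  case False then show ?thesis using MB_ge by (auto simp: psit_def)
next
  case True
  then have n: "n \<ge> 1" and i: "i = 0 \<or> i = 1" by auto
  have x': "x \<in> {0..pi}" using xin .
  show ?thesis
  proof (cases "h n = 0")
    case False
    show ?thesis
    proof (cases "i = 0")
      case True
      have "psit p lam x n i = (cos (rho lam n * of_real x) - cos (rhot p n * of_real x)) / h n"
        using n False True by (simp add: psit_def Tm_def rhoi_def diff_divide_distrib sum2)
      also have "cmod ... \<le> EB \<Omega> * pi"
        using cos_diff_bnd[OF n x'] False by (simp add: norm_divide divide_le_eq)
      finally show ?thesis using MB_ge by (simp add: mult.commute)
    next
      case False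
      then have "psit p lam x n i = cos (rhot p n * of_real x)"
        using n i \<open>h n \<noteq> 0\<close> by (simp add: psit_def Tm_def rhoi_def sum2)
      then show ?thesis using cos_real_bnd[of "rt p n * x"] MB_ge by (simp add: rhot_rt)
    qed
  next
    case True
    show ?thesis
    proof (cases "i = 0")
      case i0: True
      have "psit p lam x n i = - of_real x * sin (rhot p n * of_real x)"
        using n i0 True by (simp add: psit_def)
      also have "cmod ... \<le> pi"
      proof -
        have s1: "cmod (sin (rhot p n * of_real x)) \<le> 1" using sin_real_bnd[of "rt p n * x"] by (simp add: rhot_rt)
        have "cmod (- of_real x * sin (rhot p n * of_real x)) = x * cmod (sin (rhot p n * of_real x))"
          using x0 by (simp add: norm_mult)
        also have "... \<le> x * 1" using s1 x0 by (intro mult_left_mono) auto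
        finally show ?thesis using xpi by simp
      qed
      finally show ?thesis using MB_ge by simp
    next
      case False
      then have "psit p lam x n i = cos (rhot p n * of_real x)"
        using n i True by (simp add: psit_def)
      then show ?thesis using cos_real_bnd[of "rt p n * x"] MB_ge by (simp add: rhot_rt)
    qed
  qed
qed

lemma psit_msp: "psit p lam x \<in> msp"
  unfolding msp_def
proof (intro CollectI conjI)
  show "\<exists>B. \<forall>n i. cmod (psit p lam x n i) \<le> B" using psit_bnd by blast
qed (auto simp: psit_def)

lemma bokx:
  "\<And>a n i. a \<in> msp \<Longrightarrow> n \<ge> 1 \<Longrightarrow> i \<le> 1 \<Longrightarrow> summable (\<lambda>k. \<Sum>j<2. Hm p lam al x n (Suc k) i j * a (Suc k) j)"
  "bij_betw (Aop p lam al x) msp msp"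
  "\<And>f B n i. f \<in> msp \<Longrightarrow> (\<forall>n i. cmod (f n i) \<le> B) \<Longrightarrow> cmod (the_inv_into msp (Aop p lam al x) f n i) \<le> K * B"
proof -
  have B: "(\<forall>a\<in>msp. \<forall>n i. n \<ge> 1 \<longrightarrow> i \<le> 1 \<longrightarrow>
            summable (\<lambda>k. \<Sum>j<2. Hm p lam al x n (Suc k) i j * a (Suc k) j)) \<and>
        bij_betw (Aop p lam al x) msp msp \<and>
        (\<forall>f\<in>msp. \<forall>B. (\<forall>n i. cmod (f n i) \<le> B) \<longrightarrow>
            (\<forall>n i. cmod (the_inv_into msp (Aop p lam al x) f n i) \<le> K * B))"
    using bok xin unfolding BOK_def by (rule conjunct2[THEN bspec])
  show "\<And>a n i. a \<in> msp \<Longrightarrow> n \<ge> 1 \<Longrightarrow> i \<le> 1 \<Longrightarrow> summable (\<lambda>k. \<Sum>j<2. Hm p lam al x n (Suc k) i j * a (Suc k) j)"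
    using B by simp
  show "bij_betw (Aop p lam al x) msp msp" using B by simp
  show "\<And>f B n i. f \<in> msp \<Longrightarrow> (\<forall>n i. cmod (f n i) \<le> B) \<Longrightarrow> cmod (the_inv_into msp (Aop p lam al x) f n i) \<le> K * B"
    using B by simp
qed

lemma psi_msp: "psi p lam al x \<in> msp"
  unfolding psi_def using the_inv_into_into[of "Aop p lam al x" msp "psit p lam x" msp] bokx(2) psit_msp
  by (auto simp: bij_betw_def)

lemma psi_eq: "Aop p lam al x (psi p lam al x) = psit p lam x"
  unfolding psi_def using f_the_inv_into_f[of "Aop p lam al x" msp "psit p lam x"] bokx(2) psit_msp
  by (auto simp: bij_betw_def)

lemma psi_bnd: "cmod (psi p lam al x n i) \<le> K * MB \<Omega>"
  unfolding psi_def by (rule bokx(3)[OF psit_msp]) (use psit_bnd in blast)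

abbreviation ps where "ps \<equiv> psi p lam al x"
abbreviation w where "w n i \<equiv> psit p lam x n i - psi p lam al x n i"

lemma w_bnd: "cmod (w n i) \<le> MB \<Omega> + K * MB \<Omega>"
  using norm_triangle_ineq4[of "psit p lam x n i" "ps n i"] psit_bnd[of n i] psi_bnd[of n i] by linarith

lemma H_sums: "n \<ge> 1 \<Longrightarrow> i \<le> 1 \<Longrightarrow> (\<lambda>k. \<Sum>j<2. Hm p lam al x n (Suc k) i j * ps (Suc k) j) sums w n i"
proof -
  assume n: "n \<ge> 1" and i: "i \<le> 1"
  have "ps n i + Hop p lam al x ps n i = psit p lam x n i"
  proof -
    have "Aop p lam al x ps n i = psit p lam x n i" using psi_eq by simp
    then show ?thesis by (simp add: Aop_def)
  qed
  then have "Hop p lam al x ps n i = w n i" by (simp add: algebra_simps)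
  then have "(\<Sum>k. \<Sum>j<2. Hm p lam al x n (Suc k) i j * ps (Suc k) j) = w n i"
    using n i by (simp add: Hop_def)
  with bokx(1)[OF psi_msp n i] show ?thesis by (simp add: summable_sums_iff)
qed

lemma gterm_alt: "gterm p lam al x n i k = (\<Sum>j<2. mmul (Qm p lam al x n k) (Tinv p lam k) i j * ps k j)"
  unfolding gterm_def mmul_vec ..

lemma Hrow1: "n \<ge> 1 \<Longrightarrow> (\<Sum>j<2. Hm p lam al x n k 1 j * ps k j) = gterm p lam al x n 1 k"
proof (cases "h n = 0")
  case True
  then have "(\<Sum>j<2. Hm p lam al x n k 1 j * ps k j) = (\<Sum>l<2. Hd p lam al x n k 1 l * (\<Sum>j<2. Tinv p lam k l j * ps k j))"
    by (simp add: Hm_def mmul_vec)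
  also have "... = gterm p lam al x n 1 k" by (simp add: Hd_def gterm_def)
  finally show ?thesis .
next
  case False
  then have "(\<Sum>j<2. Hm p lam al x n k 1 j * ps k j) = (\<Sum>l<2. Tm p lam n 1 l * gterm p lam al x n l k)"
    by (simp add: Hm_def mmul_vec gterm_alt)
  also have "... = gterm p lam al x n 1 k" by (simp add: Tm_def sum2)
  finally show ?thesis .
qed

lemma Hrow0: "h n \<noteq> 0 \<Longrightarrow> (\<Sum>j<2. Hm p lam al x n k 0 j * ps k j) = (gterm p lam al x n 0 k - gterm p lam al x n 1 k) / h n"
proof -
  assume hn: "h n \<noteq> 0"
  then have "(\<Sum>j<2. Hm p lam al x n k 0 j * ps k j) = (\<Sum>l<2. Tm p lam n 0 l * gterm p lam al x n l k)"
    by (simp add: Hm_def mmul_vec gterm_alt)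
  also have "... = (gterm p lam al x n 0 k - gterm p lam al x n 1 k) / h n" by (simp add: Tm_def sum2 diff_divide_distrib)
  finally show ?thesis .
qed

lemma grow_eq: "h n = 0 \<Longrightarrow> gterm p lam al x n 0 k = gterm p lam al x n 1 k"
  by (simp add: gterm_def Qm_def Qe_def rhoi_def rhohat_def)

lemma g1_sums: "n \<ge> 1 \<Longrightarrow> (gterm p lam al x n 1 \<circ> Suc) sums w n 1"
  using H_sums[of n 1] Hrow1[of n] by (simp add: o_def)

lemma g0_sums: "n \<ge> 1 \<Longrightarrow> (gterm p lam al x n 0 \<circ> Suc) sums (h n * w n 0 + w n 1)"
proof -
  assume n: "n \<ge> 1"
  show ?thesis
  proof (cases "h n = 0")
    case True
    then show ?thesis using g1_sums[OF n] grow_eq[OF True] by (simp add: o_def)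
  next
    case False
    have "(\<lambda>k. h n * (\<Sum>j<2. Hm p lam al x n (Suc k) 0 j * ps (Suc k) j) + gterm p lam al x n 1 (Suc k)) sums (h n * w n 0 + w n 1)"
      using sums_add[OF sums_mult[OF H_sums[OF n, of 0]] g1_sums[OF n]] by (simp add: o_def)
    then show ?thesis using Hrow0[OF False] False by (simp add: o_def)
  qed
qed

lemma g1_eq: "n \<ge> 1 \<Longrightarrow> g p lam al x n 1 = w n 1"
  using g1_sums by (simp add: g_def sums_iff o_def)

lemma g0_eq: "n \<ge> 1 \<Longrightarrow> g p lam al x n 0 = h n * w n 0 + w n 1"
  using g0_sums by (simp add: g_def sums_iff o_def)

end

lemma cont_cos_c[continuous_intros]: "continuous_on S (\<lambda>t::real. cos (c * complex_of_real t))"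
  by (intro continuous_intros)

context lctx begin

definition u where "u k = h k * ps k 0 + ps k 1"
definition fk where "fk k t = al k * u k * cos (rho lam k * of_real t) - alphat p k * ps k 1 * cos (rhot p k * of_real t)"

lemma fk_cont: "continuous_on S (fk k)"
  unfolding fk_def by (intro continuous_intros)

lemma gterm_int: "gterm p lam al x n i k = integral {0..x} (\<lambda>t. cos (rhoi p lam n i * of_real t) * fk k t)"
proof -
  let ?r = "rhoi p lam n i"
  have e: "(\<lambda>t. cos (?r * of_real t) * fk k t) = (\<lambda>t. (al k * u k) * (cos (?r * of_real t) * cos (rho lam k * of_real t))
          - (alphat p k * ps k 1) * (cos (?r * of_real t) * cos (rhot p k * of_real t)))"
    by (auto simp: fk_def algebra_simps)
  have i: "(\<lambda>t. c * (cos (?r * of_real t) * cos (s * of_real t))) integrable_on {0..x}" for c s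
    by (intro integrable_continuous_interval continuous_intros)
  have "integral {0..x} (\<lambda>t. cos (?r * of_real t) * fk k t) = (al k * u k) * Dr x ?r (rho lam k) - (alphat p k * ps k 1) * Dr x ?r (rhot p k)"
    unfolding e integral_diff[OF i i] by (simp add: Dr_def)
  also have "... = gterm p lam al x n i k"
    by (simp add: gterm_def Qm_def Qe_def alphai_def rhoi_def Tinv_def sum2 u_def algebra_simps)
  finally show ?thesis by simp
qed

definition F where "F M t = (\<Sum>k<M. fk (Suc k) t)"

lemma F_cont: "continuous_on S (F M)"
  unfolding F_def by (intro continuous_intros fk_cont)

lemma gterm_psum: "(\<Sum>k<M. gterm p lam al x n i (Suc k)) = integral {0..x} (\<lambda>t. cos (rhoi p lam n i * of_real t) * F M t)"
proof -
  have i: "(\<lambda>t. cos (rhoi p lam n i * of_real t) * fk (Suc k) t) integrable_on {0..x}" for k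
    by (intro integrable_continuous_interval continuous_intros fk_cont)
  show ?thesis unfolding gterm_int F_def sum_distrib_left
    by (subst integral_sum) (auto intro: i)
qed

end

definition Bb :: "real \<Rightarrow> real \<Rightarrow> real" where "Bb \<Omega> K = (2 + \<Omega>) * (K * MB \<Omega>)"
definition B0 :: "nat \<Rightarrow> real \<Rightarrow> real \<Rightarrow> real" where
  "B0 p \<Omega> K = real (p + 1) * Bb \<Omega> K * \<Omega> + Bb \<Omega> K * EB \<Omega> * pi * \<Omega>\<^sup>2 + K * MB \<Omega> * EB \<Omega> * pi\<^sup>2 * \<Omega>\<^sup>2"
definition CF :: "nat \<Rightarrow> real \<Rightarrow> real \<Rightarrow> real" where
  "CF p \<Omega> K = 3 * (pi * (B0 p \<Omega> K)\<^sup>2 + pi / 2 * (Bb \<Omega> K)\<^sup>2 * \<Omega>\<^sup>2 + pi\<^sup>2 * (pi / 2 * (K * MB \<Omega>)\<^sup>2 * \<Omega>\<^sup>2))"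

context lctx begin

lemma PB_nonneg: "K * MB \<Omega> \<ge> 0" using Kpos MB_ge by simp
lemma Bb_nonneg: "Bb \<Omega> K \<ge> 0" using Opos PB_nonneg by (simp add: Bb_def)

lemma alphat_bnd: "cmod (alphat p n) \<le> 1"
  using pi_gt3 by (auto simp: alphat_def norm_divide)

lemma al_bnd: "n \<ge> 1 \<Longrightarrow> cmod (al n) \<le> 1 + \<Omega>"
proof -
  assume n: "n \<ge> 1"
  have "cmod (al n) \<le> cmod (alphat p n) + cmod (al n - alphat p n)" by (metis norm_triangle_sub add.commute)
  then show ?thesis using alphat_bnd[of n] al_le_xi[of n] xi_le[OF n] by linarith
qed

definition b where "b k = al k * h k * ps k 0 + (al k - alphat p k) * ps k 1"

lemma b_bnd: "k \<ge> 1 \<Longrightarrow> cmod (b k) \<le> Bb \<Omega> K * xi p lam al k"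
proof -
  assume k: "k \<ge> 1"
  have "cmod (b k) \<le> cmod (al k) * cmod (h k) * cmod (ps k 0) + cmod (al k - alphat p k) * cmod (ps k 1)"
    unfolding b_def by (metis norm_triangle_le norm_mult order_refl)
  also have "... \<le> (1 + \<Omega>) * xi p lam al k * (K * MB \<Omega>) + xi p lam al k * (K * MB \<Omega>)"
    using al_bnd[OF k] h_le_xi[of k] psi_bnd[of k 0] psi_bnd[of k 1] al_le_xi[of k] xi_nonneg[of k] Opos
    by (intro add_mono mult_mono) auto
  also have "... = Bb \<Omega> K * xi p lam al k" by (simp add: Bb_def algebra_simps)
  finally show ?thesis .
qed

definition R where "R k t = cos (rho lam k * of_real t) - cos (rhot p k * of_real t) + h k * of_real t * sin (rhot p k * of_real t)"

lemma fk_decomp: "fk k t = b k * cos (rhot p k * of_real t) + b k * (cos (rho lam k * of_real t) - cos (rhot p k * of_real t))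
   + alphat p k * ps k 1 * R k t - of_real t * (alphat p k * ps k 1 * h k * sin (rhot p k * of_real t))"
  by (simp add: fk_def b_def R_def u_def algebra_simps)

definition Sm where "Sm M = {k \<in> {..<M}. Suc k \<le> p + 1}"
definition Lg where "Lg M = {k \<in> {..<M}. \<not> Suc k \<le> p + 1}"

definition Bd where "Bd M t = (\<Sum>k\<in>Sm M. b (Suc k))
   + (\<Sum>k<M. b (Suc k) * (cos (rho lam (Suc k) * of_real t) - cos (rhot p (Suc k) * of_real t)))
   + (\<Sum>k<M. alphat p (Suc k) * ps (Suc k) 1 * R (Suc k) t)"
definition P2 where "P2 M t = (\<Sum>k\<in>Lg M. b (Suc k) * of_real (cos (real (k - p) * t)))"
definition P4 where "P4 M t = (\<Sum>k\<in>Lg M. (2 / pi * ps (Suc k) 1 * h (Suc k)) * of_real (sin (real (k - p) * t)))"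

lemma rhot_Lg: "\<not> Suc k \<le> p + 1 \<Longrightarrow> rhot p (Suc k) = of_real (real (k - p))"
  by (simp add: rhot_rt rt_def of_nat_diff)

lemma rhot_Sm: "Suc k \<le> p + 1 \<Longrightarrow> rhot p (Suc k) = 0"
  by (simp add: rhot_def)

lemma cos_Lg: "\<not> Suc k \<le> p + 1 \<Longrightarrow> cos (rhot p (Suc k) * of_real t) = of_real (cos (real (k - p) * t))"
proof -
  assume a: "\<not> Suc k \<le> p + 1"
  have "rhot p (Suc k) * of_real t = of_real (real (k - p) * t)" using rhot_Lg[OF a] by simp
  then show ?thesis by (metis cos_of_real)
qed

lemma sin_Lg: "\<not> Suc k \<le> p + 1 \<Longrightarrow> sin (rhot p (Suc k) * of_real t) = of_real (sin (real (k - p) * t))"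
proof -
  assume a: "\<not> Suc k \<le> p + 1"
  have "rhot p (Suc k) * of_real t = of_real (real (k - p) * t)" using rhot_Lg[OF a] by simp
  then show ?thesis by (metis sin_of_real)
qed

lemma alphat_Lg: "\<not> Suc k \<le> p + 1 \<Longrightarrow> alphat p (Suc k) = 2 / pi"
  by (simp add: alphat_def)

lemma F_decomp: "F M t = Bd M t + P2 M t - of_real t * P4 M t"
proof -
  have c: "(\<Sum>k<M. b (Suc k) * cos (rhot p (Suc k) * of_real t)) = (\<Sum>k\<in>Sm M. b (Suc k)) + P2 M t"
  proof -
    have "(\<Sum>k<M. b (Suc k) * cos (rhot p (Suc k) * of_real t)) =
       (\<Sum>k<M. if Suc k \<le> p + 1 then b (Suc k) else 0) + (\<Sum>k<M. if Suc k \<le> p + 1 then 0 else b (Suc k) * of_real (cos (real (k - p) * t)))"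
      unfolding sum.distrib[symmetric]
      by (intro sum.cong refl) (auto simp: rhot_Sm cos_Lg)
    also have "... = (\<Sum>k\<in>Sm M. b (Suc k)) + P2 M t"
      unfolding Sm_def P2_def Lg_def sum.inter_filter[OF finite_lessThan] by (simp add: if_not_P cong: if_cong) (intro sum.cong refl, auto)
    finally show ?thesis .
  qed
  have s: "(\<Sum>k<M. alphat p (Suc k) * ps (Suc k) 1 * h (Suc k) * sin (rhot p (Suc k) * of_real t)) = P4 M t"
  proof -
    have "(\<Sum>k<M. alphat p (Suc k) * ps (Suc k) 1 * h (Suc k) * sin (rhot p (Suc k) * of_real t)) =
       (\<Sum>k<M. if Suc k \<le> p + 1 then 0 else (2 / pi * ps (Suc k) 1 * h (Suc k)) * of_real (sin (real (k - p) * t)))"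
      by (intro sum.cong refl) (auto simp: rhot_Sm sin_Lg alphat_Lg)
    also have "... = P4 M t"
      unfolding P4_def Lg_def sum.inter_filter[OF finite_lessThan] by (intro sum.cong refl) simp
    finally show ?thesis .
  qed
  show ?thesis
    unfolding F_def fk_decomp sum.distrib sum_subtractf c s[symmetric] Bd_def sum_distrib_left
    by (simp add: algebra_simps)
qed

end

lemma sq3: "((a::real) + b + c)\<^sup>2 \<le> 3 * (a\<^sup>2 + b\<^sup>2 + c\<^sup>2)"
proof -
  have "0 \<le> (a - b)\<^sup>2 + (b - c)\<^sup>2 + (a - c)\<^sup>2" by simp
  then show ?thesis by (simp add: power2_eq_square algebra_simps)
qed

context lctx begin

lemma xi_sum_lt: "(\<Sum>k\<in>I. (xi p lam al (Suc k))\<^sup>2) \<le> \<Omega>\<^sup>2" if "finite I"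
  using xi_psum[OF that] .

lemma card_Sm: "card (Sm M) \<le> p + 1"
proof -
  have "Sm M \<subseteq> {..<p+1}" by (auto simp: Sm_def)
  then show ?thesis by (metis card_lessThan card_mono finite_lessThan)
qed

lemma Bd_bnd: "t \<in> {0..pi} \<Longrightarrow> cmod (Bd M t) \<le> B0 p \<Omega> K"
proof -
  assume t: "t \<in> {0..pi}"
  have xs: "(\<Sum>k<M. (xi p lam al (Suc k))\<^sup>2) \<le> \<Omega>\<^sup>2" by (rule xi_sum_lt) simp
  have e1: "cmod (\<Sum>k\<in>Sm M. b (Suc k)) \<le> real (p + 1) * Bb \<Omega> K * \<Omega>"
  proof -
    have "cmod (\<Sum>k\<in>Sm M. b (Suc k)) \<le> (\<Sum>k\<in>Sm M. Bb \<Omega> K * \<Omega>)"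
    proof (rule order_trans[OF norm_sum sum_mono])
      fix k show "cmod (b (Suc k)) \<le> Bb \<Omega> K * \<Omega>"
        using order_trans[OF b_bnd[of "Suc k"] mult_left_mono[OF xi_le[of "Suc k"] Bb_nonneg]] by simp
    qed
    also have "... = real (card (Sm M)) * (Bb \<Omega> K * \<Omega>)" by simp
    also have "... \<le> real (p + 1) * (Bb \<Omega> K * \<Omega>)"
      using card_Sm[of M] Bb_nonneg Opos by (intro mult_right_mono) auto
    finally show ?thesis by (simp add: mult.assoc)
  qed
  have e2: "cmod (\<Sum>k<M. b (Suc k) * (cos (rho lam (Suc k) * of_real t) - cos (rhot p (Suc k) * of_real t)))
      \<le> Bb \<Omega> K * EB \<Omega> * pi * \<Omega>\<^sup>2"
  proof -
    have "cmod (\<Sum>k<M. b (Suc k) * (cos (rho lam (Suc k) * of_real t) - cos (rhot p (Suc k) * of_real t)))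
       \<le> (\<Sum>k<M. (Bb \<Omega> K * EB \<Omega> * pi) * (xi p lam al (Suc k))\<^sup>2)"
    proof (rule order_trans[OF norm_sum sum_mono])
      fix k
      have "cmod (b (Suc k) * (cos (rho lam (Suc k) * of_real t) - cos (rhot p (Suc k) * of_real t)))
          \<le> (Bb \<Omega> K * xi p lam al (Suc k)) * (EB \<Omega> * pi * xi p lam al (Suc k))"
        unfolding norm_mult
      proof (rule mult_mono)
        show "cmod (b (Suc k)) \<le> Bb \<Omega> K * xi p lam al (Suc k)" using b_bnd[of "Suc k"] by simp
        have "EB \<Omega> * pi * cmod (h (Suc k)) \<le> EB \<Omega> * pi * xi p lam al (Suc k)"
          using EB_ge1 by (intro mult_left_mono h_le_xi) auto
        then show "cmod (cos (rho lam (Suc k) * of_real t) - cos (rhot p (Suc k) * of_real t)) \<le> EB \<Omega> * pi * xi p lam al (Suc k)"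
          using cos_diff_bnd[of "Suc k" t] t by simp
        show "0 \<le> Bb \<Omega> K * xi p lam al (Suc k)" using Bb_nonneg xi_nonneg by simp
      qed simp
      then show "cmod (b (Suc k) * (cos (rho lam (Suc k) * of_real t) - cos (rhot p (Suc k) * of_real t)))
          \<le> (Bb \<Omega> K * EB \<Omega> * pi) * (xi p lam al (Suc k))\<^sup>2"
        by (simp add: power2_eq_square algebra_simps)
    qed
    also have "... \<le> (Bb \<Omega> K * EB \<Omega> * pi) * \<Omega>\<^sup>2"
      unfolding sum_distrib_left[symmetric] using xs Bb_nonneg EB_ge1 by (intro mult_left_mono) auto
    finally show ?thesis .
  qed
  have e3: "cmod (\<Sum>k<M. alphat p (Suc k) * ps (Suc k) 1 * R (Suc k) t) \<le> K * MB \<Omega> * EB \<Omega> * pi\<^sup>2 * \<Omega>\<^sup>2"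
  proof -
    have "cmod (\<Sum>k<M. alphat p (Suc k) * ps (Suc k) 1 * R (Suc k) t)
       \<le> (\<Sum>k<M. (K * MB \<Omega> * EB \<Omega> * pi\<^sup>2) * (xi p lam al (Suc k))\<^sup>2)"
    proof (rule order_trans[OF norm_sum sum_mono])
      fix k
      have r: "cmod (R (Suc k) t) \<le> EB \<Omega> * pi\<^sup>2 * (xi p lam al (Suc k))\<^sup>2"
      proof -
        have "EB \<Omega> * pi\<^sup>2 * (cmod (h (Suc k)))\<^sup>2 \<le> EB \<Omega> * pi\<^sup>2 * (xi p lam al (Suc k))\<^sup>2"
          using EB_ge1 by (intro mult_left_mono power_mono h_le_xi) auto
        then show ?thesis using cos_tay_bnd[of "Suc k" t] t unfolding R_def by simp
      qed
      have "cmod (alphat p (Suc k) * ps (Suc k) 1 * R (Suc k) t) \<le> 1 * (K * MB \<Omega>) * (EB \<Omega> * pi\<^sup>2 * (xi p lam al (Suc k))\<^sup>2)"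
        unfolding norm_mult using alphat_bnd psi_bnd r PB_nonneg
        by (intro mult_mono) auto
      then show "cmod (alphat p (Suc k) * ps (Suc k) 1 * R (Suc k) t) \<le> (K * MB \<Omega> * EB \<Omega> * pi\<^sup>2) * (xi p lam al (Suc k))\<^sup>2"
        by (simp add: algebra_simps)
    qed
    also have "... \<le> (K * MB \<Omega> * EB \<Omega> * pi\<^sup>2) * \<Omega>\<^sup>2"
      unfolding sum_distrib_left[symmetric] using xs PB_nonneg EB_ge1 by (intro mult_left_mono) auto
    finally show ?thesis .
  qed
  show ?thesis unfolding Bd_def B0_def
    using e1 e2 e3 by (meson add_mono norm_triangle_le)
qed

lemma Lg_ge: "k \<in> Lg M \<Longrightarrow> k - p \<ge> 1"
  by (auto simp: Lg_def)

lemma orth_Lg_cos: "k \<in> Lg M \<Longrightarrow> k' \<in> Lg M \<Longrightarrow>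
  integral {0..pi} (\<lambda>t. cos (real (k - p) * t) * cos (real (k' - p) * t)) = (if k = k' then pi/2 else 0)"
  using ortho_cos[OF Lg_ge Lg_ge, of k M k'] by (auto simp: Lg_def)

lemma orth_Lg_sin: "k \<in> Lg M \<Longrightarrow> k' \<in> Lg M \<Longrightarrow>
  integral {0..pi} (\<lambda>t. sin (real (k - p) * t) * sin (real (k' - p) * t)) = (if k = k' then pi/2 else 0)"
  using ortho_sin[OF Lg_ge Lg_ge, of k M k'] by (auto simp: Lg_def)

lemma P2_L2: "integral {0..pi} (\<lambda>t. (cmod (P2 M t))\<^sup>2) \<le> pi / 2 * (Bb \<Omega> K)\<^sup>2 * \<Omega>\<^sup>2"
proof -
  have "integral {0..pi} (\<lambda>t. (cmod (P2 M t))\<^sup>2) = pi/2 * (\<Sum>k\<in>Lg M. (cmod (b (Suc k)))\<^sup>2)"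
    unfolding P2_def
    by (rule ortho_cplx[where \<phi>="\<lambda>k t. cos (real (k - p) * t)", OF _ orth_Lg_cos]) (auto simp: Lg_def intro: continuous_intros)
  also have "... \<le> pi/2 * (\<Sum>k\<in>Lg M. (Bb \<Omega> K)\<^sup>2 * (xi p lam al (Suc k))\<^sup>2)"
    using b_bnd Bb_nonneg xi_nonneg
    by (intro mult_left_mono sum_mono) (auto simp: power_mult_distrib[symmetric] intro!: power_mono)
  also have "... \<le> pi/2 * ((Bb \<Omega> K)\<^sup>2 * \<Omega>\<^sup>2)"
    unfolding sum_distrib_left[symmetric]
    by (intro mult_left_mono xi_sum_lt) (auto simp: Lg_def)
  finally show ?thesis by (simp add: mult.assoc)
qed

lemma P4_L2: "integral {0..pi} (\<lambda>t. (cmod (P4 M t))\<^sup>2) \<le> pi / 2 * (K * MB \<Omega>)\<^sup>2 * \<Omega>\<^sup>2"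
proof -
  have "integral {0..pi} (\<lambda>t. (cmod (P4 M t))\<^sup>2) = pi/2 * (\<Sum>k\<in>Lg M. (cmod (2 / pi * ps (Suc k) 1 * h (Suc k)))\<^sup>2)"
    unfolding P4_def
    by (rule ortho_cplx[where \<phi>="\<lambda>k t. sin (real (k - p) * t)", OF _ orth_Lg_sin]) (auto simp: Lg_def intro: continuous_intros)
  also have "... \<le> pi/2 * (\<Sum>k\<in>Lg M. (K * MB \<Omega>)\<^sup>2 * (xi p lam al (Suc k))\<^sup>2)"
  proof (intro mult_left_mono sum_mono)
    fix k
    have "cmod (2 / pi * ps (Suc k) 1 * h (Suc k)) \<le> 1 * (K * MB \<Omega>) * xi p lam al (Suc k)"
      unfolding norm_mult using pi_gt3 psi_bnd h_le_xi PB_nonneg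
      by (intro mult_mono) (auto simp: norm_divide)
    then show "(cmod (2 / pi * ps (Suc k) 1 * h (Suc k)))\<^sup>2 \<le> (K * MB \<Omega>)\<^sup>2 * (xi p lam al (Suc k))\<^sup>2"
      by (simp add: power_mult_distrib[symmetric] power_mono)
  qed auto
  also have "... \<le> pi/2 * ((K * MB \<Omega>)\<^sup>2 * \<Omega>\<^sup>2)"
    unfolding sum_distrib_left[symmetric]
    by (intro mult_left_mono xi_sum_lt) (auto simp: Lg_def)
  finally show ?thesis by (simp add: mult.assoc)
qed

lemma P2_cont: "continuous_on S (P2 M)" unfolding P2_def by (intro continuous_intros)
lemma P4_cont: "continuous_on S (P4 M)" unfolding P4_def by (intro continuous_intros)

lemma F_L2: "integral {0..pi} (\<lambda>t. (cmod (F M t))\<^sup>2) \<le> CF p \<Omega> K"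
proof -
  have pw: "(cmod (F M t))\<^sup>2 \<le> 3 * ((B0 p \<Omega> K)\<^sup>2 + (cmod (P2 M t))\<^sup>2 + pi\<^sup>2 * (cmod (P4 M t))\<^sup>2)" if t: "t \<in> {0..pi}" for t
  proof -
    have "cmod (F M t) \<le> cmod (Bd M t) + cmod (P2 M t) + t * cmod (P4 M t)"
    proof -
      have "cmod (F M t) \<le> cmod (Bd M t + P2 M t) + cmod (of_real t * P4 M t)"
        unfolding F_decomp by (rule norm_triangle_ineq4)
      also have "cmod (of_real t * P4 M t) = t * cmod (P4 M t)" using t by (simp add: norm_mult)
      finally show ?thesis using norm_triangle_ineq[of "Bd M t" "P2 M t"] by linarith
    qed
    also have "... \<le> B0 p \<Omega> K + cmod (P2 M t) + pi * cmod (P4 M t)"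
      using Bd_bnd[OF t] t by (intro add_mono mult_right_mono) auto
    finally have a: "cmod (F M t) \<le> B0 p \<Omega> K + cmod (P2 M t) + pi * cmod (P4 M t)" .
    have "(cmod (F M t))\<^sup>2 \<le> (B0 p \<Omega> K + cmod (P2 M t) + pi * cmod (P4 M t))\<^sup>2"
      using a by (intro power_mono) auto
    also have "... \<le> 3 * ((B0 p \<Omega> K)\<^sup>2 + (cmod (P2 M t))\<^sup>2 + (pi * cmod (P4 M t))\<^sup>2)"
      by (rule sq3)
    finally show ?thesis by (simp add: power_mult_distrib)
  qed
  have i1: "(\<lambda>t. (cmod (F M t))\<^sup>2) integrable_on {0..pi}"
    by (intro integrable_continuous_interval continuous_intros F_cont)
  have i2: "(\<lambda>t. (cmod (P2 M t))\<^sup>2) integrable_on {0..pi}"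
    by (intro integrable_continuous_interval continuous_intros P2_cont)
  have i4: "(\<lambda>t. (cmod (P4 M t))\<^sup>2) integrable_on {0..pi}"
    by (intro integrable_continuous_interval continuous_intros P4_cont)
  have "integral {0..pi} (\<lambda>t. (cmod (F M t))\<^sup>2) \<le> integral {0..pi} (\<lambda>t. 3 * ((B0 p \<Omega> K)\<^sup>2 + (cmod (P2 M t))\<^sup>2 + pi\<^sup>2 * (cmod (P4 M t))\<^sup>2))"
    by (rule integral_le[OF i1 _ pw]) (intro integrable_continuous_interval continuous_intros P2_cont P4_cont)
  also have "... = 3 * (pi * (B0 p \<Omega> K)\<^sup>2 + integral {0..pi} (\<lambda>t. (cmod (P2 M t))\<^sup>2) + pi\<^sup>2 * integral {0..pi} (\<lambda>t. (cmod (P4 M t))\<^sup>2))"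
  proof (rule integral_unique)
    have c: "((\<lambda>t. (B0 p \<Omega> K)\<^sup>2) has_integral pi * (B0 p \<Omega> K)\<^sup>2) {0..pi}"
      using has_integral_const_real[of "(B0 p \<Omega> K)\<^sup>2" 0 pi] by simp
    show "((\<lambda>t. 3 * ((B0 p \<Omega> K)\<^sup>2 + (cmod (P2 M t))\<^sup>2 + pi\<^sup>2 * (cmod (P4 M t))\<^sup>2)) has_integral
       3 * (pi * (B0 p \<Omega> K)\<^sup>2 + integral {0..pi} (\<lambda>t. (cmod (P2 M t))\<^sup>2) + pi\<^sup>2 * integral {0..pi} (\<lambda>t. (cmod (P4 M t))\<^sup>2))) {0..pi}"
      by (intro has_integral_mult_right has_integral_add c integrable_integral i2 i4)
  qed
  also have "... \<le> CF p \<Omega> K"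
    unfolding CF_def using P2_L2[of M] P4_L2[of M] by (intro mult_left_mono add_mono) auto
  finally show ?thesis .
qed

end

definition CH1 :: "nat \<Rightarrow> real \<Rightarrow> real \<Rightarrow> real" where
  "CH1 p \<Omega> K = real (p + 1) * ((pi + CF p \<Omega> K) / 2)\<^sup>2 + pi / 2 * CF p \<Omega> K"

context lctx begin

lemma CF_nonneg: "CF p \<Omega> K \<ge> 0"
  unfolding CF_def by (intro mult_nonneg_nonneg add_nonneg_nonneg) auto

lemma F_L2x: "r \<in> {0..pi} \<Longrightarrow> integral {0..r} (\<lambda>t. (cmod (F M t))\<^sup>2) \<le> CF p \<Omega> K"
proof -
  assume r: "r \<in> {0..pi}"
  have "integral {0..r} (\<lambda>t. (cmod (F M t))\<^sup>2) \<le> integral {0..pi} (\<lambda>t. (cmod (F M t))\<^sup>2)"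
    using r by (intro integral_subset_le integrable_continuous_interval continuous_intros F_cont) auto
  then show ?thesis using F_L2[of M] by linarith
qed

lemma F_L1: "integral {0..x} (\<lambda>t. cmod (F M t)) \<le> (pi + CF p \<Omega> K) / 2"
proof -
  have i1: "(\<lambda>t. cmod (F M t)) integrable_on {0..x}"
    by (intro integrable_continuous_interval continuous_intros F_cont)
  have i2: "(\<lambda>t. (cmod (F M t))\<^sup>2) integrable_on {0..x}"
    by (intro integrable_continuous_interval continuous_intros F_cont)
  have "integral {0..x} (\<lambda>t. cmod (F M t)) \<le> integral {0..x} (\<lambda>t. (1 + (cmod (F M t))\<^sup>2) / 2)"
  proof (rule integral_le[OF i1])
    show "(\<lambda>t. (1 + (cmod (F M t))\<^sup>2) / 2) integrable_on {0..x}"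
      by (intro integrable_continuous_interval continuous_intros F_cont) auto
    fix t
    have "0 \<le> (cmod (F M t) - 1)\<^sup>2" by simp
    then show "cmod (F M t) \<le> (1 + (cmod (F M t))\<^sup>2) / 2" by (simp add: power2_eq_square algebra_simps)
  qed
  also have "... = (x + integral {0..x} (\<lambda>t. (cmod (F M t))\<^sup>2)) / 2"
  proof (rule integral_unique)
    have c: "((\<lambda>t. 1::real) has_integral x) {0..x}"
      using has_integral_const_real[of "1::real" 0 x] x0 by simp
    show "((\<lambda>t. (1 + (cmod (F M t))\<^sup>2) / 2) has_integral (x + integral {0..x} (\<lambda>t. (cmod (F M t))\<^sup>2)) / 2) {0..x}"
      by (intro has_integral_divide has_integral_add c integrable_integral i2)
  qed
  also have "... \<le> (pi + CF p \<Omega> K) / 2"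
    using F_L2x[OF xin, of M] xpi by simp
  finally show ?thesis .
qed

lemma I_split: "finite I \<Longrightarrow> sum f I = sum f (I \<inter> {..p+1}) + sum f (I - {..p+1})"
  by (rule sum.Int_Diff)

lemma card_small: "I \<subseteq> {1..} \<Longrightarrow> card (I \<inter> {..p+1}) \<le> p + 1"
proof -
  assume "I \<subseteq> {1..}"
  then have "I \<inter> {..p+1} \<subseteq> {1..p+1}" by auto
  then show ?thesis by (metis card_atLeastAtMost card_mono finite_atLeastAtMost diff_Suc_1 add.commute plus_1_eq_Suc)
qed

lemma cos_large: "\<not> n \<le> p + 1 \<Longrightarrow> cos (rhot p n * of_real t) = of_real (cos (real (n - p - 1) * t))"
proof -
  assume a: "\<not> n \<le> p + 1"
  have "rhot p n * of_real t = of_real (real (n - p - 1) * t)" using a by (simp add: rhot_rt rt_def of_nat_diff)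
  then show ?thesis by (metis cos_of_real)
qed

lemma sin_large: "\<not> n \<le> p + 1 \<Longrightarrow> sin (rhot p n * of_real t) = of_real (sin (real (n - p - 1) * t))"
proof -
  assume a: "\<not> n \<le> p + 1"
  have "rhot p n * of_real t = of_real (real (n - p - 1) * t)" using a by (simp add: rhot_rt rt_def of_nat_diff)
  then show ?thesis by (metis sin_of_real)
qed

lemma orth_large_cos: "n \<in> I - {..p+1} \<Longrightarrow> n' \<in> I - {..p+1} \<Longrightarrow>
  integral {0..pi} (\<lambda>t. cos (real (n - p - 1) * t) * cos (real (n' - p - 1) * t)) = (if n = n' then pi/2 else 0)"
  using ortho_cos[of "n - p - 1" "n' - p - 1"] by auto

lemma orth_large_sin: "n \<in> I - {..p+1} \<Longrightarrow> n' \<in> I - {..p+1} \<Longrightarrow>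
  integral {0..pi} (\<lambda>t. sin (real (n - p - 1) * t) * sin (real (n' - p - 1) * t)) = (if n = n' then pi/2 else 0)"
  using ortho_sin[of "n - p - 1" "n' - p - 1"] by auto

lemma H1_M: "finite I \<Longrightarrow> I \<subseteq> {1..} \<Longrightarrow>
  (\<Sum>n\<in>I. (cmod (integral {0..x} (\<lambda>t. cos (rhot p n * of_real t) * F M t)))\<^sup>2) \<le> CH1 p \<Omega> K"
proof -
  assume I: "finite I" "I \<subseteq> {1..}"
  let ?f = "\<lambda>n. (cmod (integral {0..x} (\<lambda>t. cos (rhot p n * of_real t) * F M t)))\<^sup>2"
  have small: "sum ?f (I \<inter> {..p+1}) \<le> real (p + 1) * ((pi + CF p \<Omega> K) / 2)\<^sup>2"
  proof -
    have "sum ?f (I \<inter> {..p+1}) \<le> (\<Sum>n\<in>I \<inter> {..p+1}. ((pi + CF p \<Omega> K) / 2)\<^sup>2)"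
    proof (rule sum_mono)
      fix n assume "n \<in> I \<inter> {..p+1}"
      then have "rhot p n = 0" by (simp add: rhot_def)
      then have "cmod (integral {0..x} (\<lambda>t. cos (rhot p n * of_real t) * F M t)) = cmod (integral {0..x} (F M))"
        by simp
      also have "... \<le> integral {0..x} (\<lambda>t. cmod (F M t))"
        by (intro integral_norm_bound_integral integrable_continuous_interval continuous_intros F_cont) auto
      also have "... \<le> (pi + CF p \<Omega> K) / 2" by (rule F_L1)
      finally show "?f n \<le> ((pi + CF p \<Omega> K) / 2)\<^sup>2" by (intro power_mono) auto
    qed
    also have "... \<le> real (p + 1) * ((pi + CF p \<Omega> K) / 2)\<^sup>2"
      using card_small[OF I(2)] by (simp add: mult_right_mono)
    finally show ?thesis .
  qed
  have large: "sum ?f (I - {..p+1}) \<le> pi / 2 * CF p \<Omega> K"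
  proof -
    have "sum ?f (I - {..p+1}) = (\<Sum>n\<in>I - {..p+1}. (cmod (integral {0..x} (\<lambda>t. of_real (cos (real (n - p - 1) * t)) * F M t)))\<^sup>2)"
      by (intro sum.cong refl) (simp add: cos_large)
    also have "... \<le> pi / 2 * integral {0..pi} (\<lambda>t. (cmod (F M t))\<^sup>2)"
      by (rule bessel[OF _ orth_large_cos _ x0 xpi F_cont]) (use I in \<open>auto intro: continuous_intros\<close>)
    also have "... \<le> pi / 2 * CF p \<Omega> K" using F_L2[of M] by simp
    finally show ?thesis .
  qed
  show ?thesis unfolding I_split[OF I(1)] CH1_def using small large by linarith
qed

end

definition CH2 :: "nat \<Rightarrow> real \<Rightarrow> real \<Rightarrow> real" where
  "CH2 p \<Omega> K = EB \<Omega> * pi\<^sup>2 * \<Omega>\<^sup>2 * ((pi + CF p \<Omega> K) / 2) + (\<Omega>\<^sup>2 + pi / 2 * (pi\<^sup>2 * CF p \<Omega> K)) / 2"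

context lctx begin

lemma H1: "finite I \<Longrightarrow> I \<subseteq> {1..} \<Longrightarrow> (\<Sum>n\<in>I. (cmod (g p lam al x n 1))\<^sup>2) \<le> CH1 p \<Omega> K"
proof -
  assume I: "finite I" "I \<subseteq> {1..}"
  have lim: "(\<lambda>M. \<Sum>n\<in>I. (cmod (\<Sum>k<M. gterm p lam al x n 1 (Suc k)))\<^sup>2) \<longlonglongrightarrow> (\<Sum>n\<in>I. (cmod (g p lam al x n 1))\<^sup>2)"
  proof (intro tendsto_sum tendsto_power tendsto_norm)
    fix n assume "n \<in> I"
    then have n: "n \<ge> 1" using I by auto
    have "(gterm p lam al x n 1 \<circ> Suc) sums g p lam al x n 1" using g1_sums[OF n] g1_eq[OF n] by simp
    then show "(\<lambda>M. \<Sum>k<M. gterm p lam al x n 1 (Suc k)) \<longlonglongrightarrow> g p lam al x n 1"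
      by (simp add: sums_def o_def)
  qed
  show ?thesis
  proof (rule LIMSEQ_le_const2[OF lim], intro exI allI impI)
    fix M
    show "(\<Sum>n\<in>I. (cmod (\<Sum>k<M. gterm p lam al x n 1 (Suc k)))\<^sup>2) \<le> CH1 p \<Omega> K"
      unfolding gterm_psum using H1_M[OF I, of M] by (simp add: rhoi_def)
  qed
qed

lemma R_bnd: "n \<ge> 1 \<Longrightarrow> t \<in> {0..pi} \<Longrightarrow> cmod (R n t) \<le> EB \<Omega> * pi\<^sup>2 * (xi p lam al n)\<^sup>2"
proof -
  assume n: "n \<ge> 1" and t: "t \<in> {0..pi}"
  have "EB \<Omega> * pi\<^sup>2 * (cmod (h n))\<^sup>2 \<le> EB \<Omega> * pi\<^sup>2 * (xi p lam al n)\<^sup>2"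
    using EB_ge1 by (intro mult_left_mono power_mono h_le_xi) auto
  then show ?thesis using cos_tay_bnd[OF n t] unfolding R_def by simp
qed

definition Y where "Y M n = cmod (integral {0..x} (\<lambda>t. sin (rhot p n * of_real t) * (of_real t * F M t)))"

lemma H2_n: "n \<ge> 1 \<Longrightarrow> cmod (integral {0..x} (\<lambda>t. (cos (rho lam n * of_real t) - cos (rhot p n * of_real t)) * F M t))
   \<le> EB \<Omega> * pi\<^sup>2 * ((pi + CF p \<Omega> K) / 2) * (xi p lam al n)\<^sup>2 + cmod (h n) * Y M n"
proof -
  assume n: "n \<ge> 1"
  have e: "(\<lambda>t. (cos (rho lam n * of_real t) - cos (rhot p n * of_real t)) * F M t) =
     (\<lambda>t. R n t * F M t - h n * (sin (rhot p n * of_real t) * (of_real t * F M t)))"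
    by (auto simp: R_def algebra_simps)
  have iR: "(\<lambda>t. R n t * F M t) integrable_on {0..x}"
    unfolding R_def by (intro integrable_continuous_interval continuous_intros F_cont)
  have iS: "(\<lambda>t. h n * (sin (rhot p n * of_real t) * (of_real t * F M t))) integrable_on {0..x}"
    by (intro integrable_continuous_interval continuous_intros F_cont)
  have "cmod (integral {0..x} (\<lambda>t. (cos (rho lam n * of_real t) - cos (rhot p n * of_real t)) * F M t))
      \<le> cmod (integral {0..x} (\<lambda>t. R n t * F M t)) + cmod (h n) * Y M n"
    unfolding e integral_diff[OF iR iS] Y_def integral_mult_right norm_mult[symmetric]
    by (rule norm_triangle_ineq4)
  also have "cmod (integral {0..x} (\<lambda>t. R n t * F M t)) \<le> integral {0..x} (\<lambda>t. (EB \<Omega> * pi\<^sup>2 * (xi p lam al n)\<^sup>2) * cmod (F M t))"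
  proof (rule integral_norm_bound_integral[OF iR])
    show "(\<lambda>t. (EB \<Omega> * pi\<^sup>2 * (xi p lam al n)\<^sup>2) * cmod (F M t)) integrable_on {0..x}"
      by (intro integrable_continuous_interval continuous_intros F_cont)
    fix t assume "t \<in> {0..x}"
    then have t: "t \<in> {0..pi}" using xpi by auto
    show "cmod (R n t * F M t) \<le> (EB \<Omega> * pi\<^sup>2 * (xi p lam al n)\<^sup>2) * cmod (F M t)"
      unfolding norm_mult by (intro mult_right_mono R_bnd[OF n t]) auto
  qed
  also have "... = (EB \<Omega> * pi\<^sup>2 * (xi p lam al n)\<^sup>2) * integral {0..x} (\<lambda>t. cmod (F M t))"
    by simp
  also have "... \<le> (EB \<Omega> * pi\<^sup>2 * (xi p lam al n)\<^sup>2) * ((pi + CF p \<Omega> K) / 2)"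
    using EB_ge1 by (intro mult_left_mono F_L1) auto
  finally show ?thesis by (simp add: algebra_simps)
qed

lemma tF_L2: "integral {0..pi} (\<lambda>t. (cmod (of_real t * F M t))\<^sup>2) \<le> pi\<^sup>2 * CF p \<Omega> K"
proof -
  have "integral {0..pi} (\<lambda>t. (cmod (of_real t * F M t))\<^sup>2) \<le> integral {0..pi} (\<lambda>t. pi\<^sup>2 * (cmod (F M t))\<^sup>2)"
  proof (rule integral_le)
    show "(\<lambda>t. (cmod (complex_of_real t * F M t))\<^sup>2) integrable_on {0..pi}"
      by (intro integrable_continuous_interval continuous_intros F_cont)
    show "(\<lambda>t. pi\<^sup>2 * (cmod (F M t))\<^sup>2) integrable_on {0..pi}"
      by (intro integrable_continuous_interval continuous_intros F_cont)
    fix t assume t: "t \<in> {0..pi}"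
    have "(cmod (of_real t * F M t))\<^sup>2 = t\<^sup>2 * (cmod (F M t))\<^sup>2" using t by (simp add: norm_mult power_mult_distrib)
    also have "... \<le> pi\<^sup>2 * (cmod (F M t))\<^sup>2" using t by (intro mult_right_mono power_mono) auto
    finally show "(cmod (of_real t * F M t))\<^sup>2 \<le> pi\<^sup>2 * (cmod (F M t))\<^sup>2" .
  qed
  also have "... \<le> pi\<^sup>2 * CF p \<Omega> K" using F_L2[of M] by simp
  finally show ?thesis .
qed

lemma Y_sum: "finite I \<Longrightarrow> I \<subseteq> {1..} \<Longrightarrow> (\<Sum>n\<in>I. (Y M n)\<^sup>2) \<le> pi / 2 * (pi\<^sup>2 * CF p \<Omega> K)"
proof -
  assume I: "finite I" "I \<subseteq> {1..}"
  have small: "(\<Sum>n\<in>I \<inter> {..p+1}. (Y M n)\<^sup>2) = 0"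
    by (intro sum.neutral) (auto simp: Y_def rhot_def)
  have "(\<Sum>n\<in>I - {..p+1}. (Y M n)\<^sup>2) = (\<Sum>n\<in>I - {..p+1}. (cmod (integral {0..x} (\<lambda>t. of_real (sin (real (n - p - 1) * t)) * (of_real t * F M t))))\<^sup>2)"
    by (intro sum.cong refl) (simp add: Y_def sin_large)
  also have "... \<le> pi / 2 * integral {0..pi} (\<lambda>t. (cmod (of_real t * F M t))\<^sup>2)"
    by (rule bessel[OF _ orth_large_sin _ x0 xpi]) (use I in \<open>auto intro: continuous_intros F_cont\<close>)
  also have "... \<le> pi / 2 * (pi\<^sup>2 * CF p \<Omega> K)" using tF_L2[of M] by simp
  finally show ?thesis unfolding I_split[OF I(1)] small by simp
qed

lemma H2_M: "finite I \<Longrightarrow> I \<subseteq> {1..} \<Longrightarrow>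
  (\<Sum>n\<in>I. cmod (integral {0..x} (\<lambda>t. (cos (rho lam n * of_real t) - cos (rhot p n * of_real t)) * F M t))) \<le> CH2 p \<Omega> K"
proof -
  assume I: "finite I" "I \<subseteq> {1..}"
  let ?A = "EB \<Omega> * pi\<^sup>2 * ((pi + CF p \<Omega> K) / 2)"
  have "(\<Sum>n\<in>I. cmod (integral {0..x} (\<lambda>t. (cos (rho lam n * of_real t) - cos (rhot p n * of_real t)) * F M t)))
     \<le> (\<Sum>n\<in>I. ?A * (xi p lam al n)\<^sup>2 + ((xi p lam al n)\<^sup>2 + (Y M n)\<^sup>2) / 2)"
  proof (rule sum_mono)
    fix n assume "n \<in> I"
    then have n: "n \<ge> 1" using I by auto
    have "cmod (h n) * Y M n \<le> xi p lam al n * Y M n"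
      by (intro mult_right_mono h_le_xi) (simp add: Y_def)
    also have "... \<le> ((xi p lam al n)\<^sup>2 + (Y M n)\<^sup>2) / 2"
    proof -
      have "0 \<le> (xi p lam al n - Y M n)\<^sup>2" by simp
      then show ?thesis by (simp add: power2_eq_square algebra_simps)
    qed
    finally show "cmod (integral {0..x} (\<lambda>t. (cos (rho lam n * of_real t) - cos (rhot p n * of_real t)) * F M t))
      \<le> ?A * (xi p lam al n)\<^sup>2 + ((xi p lam al n)\<^sup>2 + (Y M n)\<^sup>2) / 2"
      using H2_n[OF n, of M] by linarith
  qed
  also have "... = ?A * (\<Sum>n\<in>I. (xi p lam al n)\<^sup>2) + ((\<Sum>n\<in>I. (xi p lam al n)\<^sup>2) + (\<Sum>n\<in>I. (Y M n)\<^sup>2)) / 2"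
    by (simp add: sum.distrib sum_distrib_left sum_divide_distrib[symmetric] add_divide_distrib)
  also have "... \<le> ?A * \<Omega>\<^sup>2 + (\<Omega>\<^sup>2 + pi / 2 * (pi\<^sup>2 * CF p \<Omega> K)) / 2"
    using xi_psum1[OF I] Y_sum[OF I, of M] EB_ge1 CF_nonneg
    by (intro add_mono mult_left_mono divide_right_mono) auto
  also have "... = CH2 p \<Omega> K" by (simp add: CH2_def algebra_simps)
  finally show ?thesis .
qed

lemma H2: "finite I \<Longrightarrow> I \<subseteq> {1..} \<Longrightarrow> (\<Sum>n\<in>I. cmod (g p lam al x n 0 - g p lam al x n 1)) \<le> CH2 p \<Omega> K"
proof -
  assume I: "finite I" "I \<subseteq> {1..}"
  have lim: "(\<lambda>M. \<Sum>n\<in>I. cmod ((\<Sum>k<M. gterm p lam al x n 0 (Suc k)) - (\<Sum>k<M. gterm p lam al x n 1 (Suc k))))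
     \<longlonglongrightarrow> (\<Sum>n\<in>I. cmod (g p lam al x n 0 - g p lam al x n 1))"
  proof (intro tendsto_sum tendsto_norm tendsto_diff)
    fix n assume "n \<in> I"
    then have n: "n \<ge> 1" using I by auto
    have "(gterm p lam al x n 1 \<circ> Suc) sums g p lam al x n 1" using g1_sums[OF n] g1_eq[OF n] by simp
    then show "(\<lambda>M. \<Sum>k<M. gterm p lam al x n 1 (Suc k)) \<longlonglongrightarrow> g p lam al x n 1"
      by (simp add: sums_def o_def)
    have "(gterm p lam al x n 0 \<circ> Suc) sums g p lam al x n 0" using g0_sums[OF n] g0_eq[OF n] by simp
    then show "(\<lambda>M. \<Sum>k<M. gterm p lam al x n 0 (Suc k)) \<longlonglongrightarrow> g p lam al x n 0"
      by (simp add: sums_def o_def)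
  qed
  show ?thesis
  proof (rule LIMSEQ_le_const2[OF lim], intro exI allI impI)
    fix M
    have e: "(\<Sum>k<M. gterm p lam al x n 0 (Suc k)) - (\<Sum>k<M. gterm p lam al x n 1 (Suc k)) =
       integral {0..x} (\<lambda>t. (cos (rho lam n * of_real t) - cos (rhot p n * of_real t)) * F M t)" for n
    proof -
      have i: "(\<lambda>t. cos (c * of_real t) * F M t) integrable_on {0..x}" for c
        by (intro integrable_continuous_interval continuous_intros F_cont)
      show ?thesis unfolding gterm_psum integral_diff[OF i i, symmetric]
        by (simp add: rhoi_def algebra_simps)
    qed
    show "(\<Sum>n\<in>I. cmod ((\<Sum>k<M. gterm p lam al x n 0 (Suc k)) - (\<Sum>k<M. gterm p lam al x n 1 (Suc k)))) \<le> CH2 p \<Omega> K"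
      unfolding e using H2_M[OF I, of M] .
  qed
qed

end

lemma summable_from_finite:
  fixes f :: "nat \<Rightarrow> real"
  assumes nn: "\<And>n. f n \<ge> 0" and bd: "\<And>I. finite I \<Longrightarrow> I \<subseteq> {1..} \<Longrightarrow> sum f I \<le> B"
  shows "summable (\<lambda>n. f (Suc n)) \<and> (\<Sum>n. f (Suc n)) \<le> B"
proof -
  have r: "sum (\<lambda>k. f (Suc k)) A = sum f (Suc ` A)" for A
    by (simp add: sum.reindex)
  have s: "summable (\<lambda>n. f (Suc n))"
    by (rule bounded_imp_summable[where B=B]) (use nn in simp, simp add: r, intro bd, auto)
  moreover have "(\<Sum>n. f (Suc n)) \<le> B"
    by (rule suminf_le_const[OF s]) (simp add: r, intro bd, auto)
  ultimately show ?thesis by simp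
qed

definition Wc :: "real \<Rightarrow> real \<Rightarrow> real" where "Wc \<Omega> K = MB \<Omega> + K * MB \<Omega>"

definition Cfin :: "nat \<Rightarrow> real \<Rightarrow> real \<Rightarrow> real" where
  "Cfin p \<Omega> K = max (K * MB \<Omega>) (max ((\<Omega> + 1) * Wc \<Omega> K) (max (sqrt (CH1 p \<Omega> K))
      (max (sqrt (2 * (Wc \<Omega> K)\<^sup>2 * \<Omega>\<^sup>2 + 2 * CH1 p \<Omega> K)) (CH2 p \<Omega> K))))"

context lctx begin

lemma W_nonneg: "Wc \<Omega> K \<ge> 0" using PB_nonneg MB_ge by (simp add: Wc_def)

lemma w_bndW: "cmod (w n i) \<le> Wc \<Omega> K" using w_bnd by (simp add: Wc_def)

lemma g0_bnd: "n \<ge> 1 \<Longrightarrow> cmod (g p lam al x n 0) \<le> cmod (h n) * Wc \<Omega> K + cmod (g p lam al x n 1)"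
proof -
  assume n: "n \<ge> 1"
  have "cmod (g p lam al x n 0) \<le> cmod (h n * w n 0) + cmod (w n 1)"
    unfolding g0_eq[OF n] by (rule norm_triangle_ineq)
  also have "cmod (h n * w n 0) \<le> cmod (h n) * Wc \<Omega> K"
    unfolding norm_mult by (intro mult_left_mono w_bndW) auto
  finally show ?thesis using g1_eq[OF n] by simp
qed

lemma main_local:
  "(\<forall>n i. n \<ge> 1 \<longrightarrow> i \<le> 1 \<longrightarrow>
        cmod (psi p lam al x n i) \<le> Cfin p \<Omega> K \<and>
        summable (gterm p lam al x n i \<circ> Suc) \<and>
        cmod (g p lam al x n i) \<le> Cfin p \<Omega> K) \<and>
   (\<forall>i\<le>1. summable (\<lambda>n. (cmod (g p lam al x (Suc n) i))\<^sup>2) \<and>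
        sqrt (\<Sum>n. (cmod (g p lam al x (Suc n) i))\<^sup>2) \<le> Cfin p \<Omega> K) \<and>
   summable (\<lambda>n. cmod (g p lam al x (Suc n) 0 - g p lam al x (Suc n) 1)) \<and>
   (\<Sum>n. cmod (g p lam al x (Suc n) 0 - g p lam al x (Suc n) 1)) \<le> Cfin p \<Omega> K"
proof (intro conjI allI impI)
  fix n i :: nat assume n: "n \<ge> 1" and i: "i \<le> 1"
  show "cmod (psi p lam al x n i) \<le> Cfin p \<Omega> K"
    using psi_bnd[of n i] unfolding Cfin_def by linarith
  show "summable (gterm p lam al x n i \<circ> Suc)"
  proof -
    have "i = 0 \<or> i = 1" using i by auto
    then show ?thesis using g0_sums[OF n] g1_sums[OF n] by (elim disjE) (auto simp: sums_iff)
  qed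
  have g1b: "cmod (g p lam al x n 1) \<le> Wc \<Omega> K" using g1_eq[OF n] w_bndW by simp
  have "cmod (h n) * Wc \<Omega> K \<le> \<Omega> * Wc \<Omega> K" using h_le[OF n] W_nonneg by (intro mult_right_mono) auto
  then have g0b: "cmod (g p lam al x n 0) \<le> (\<Omega> + 1) * Wc \<Omega> K" using g0_bnd[OF n] g1b by (simp add: algebra_simps)
  have "(\<Omega> + 1) * Wc \<Omega> K \<ge> Wc \<Omega> K" using Opos W_nonneg by (simp add: algebra_simps)
  then have "cmod (g p lam al x n i) \<le> (\<Omega> + 1) * Wc \<Omega> K"
    using i g0b g1b \<open>(\<Omega> + 1) * Wc \<Omega> K \<ge> Wc \<Omega> K\<close> le_Suc_eq[of i 0] by auto
  then show "cmod (g p lam al x n i) \<le> Cfin p \<Omega> K" unfolding Cfin_def by linarith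
next
  fix i :: nat assume i: "i \<le> 1"
  have s1: "summable (\<lambda>n. (cmod (g p lam al x (Suc n) 1))\<^sup>2) \<and> (\<Sum>n. (cmod (g p lam al x (Suc n) 1))\<^sup>2) \<le> CH1 p \<Omega> K"
  proof (rule summable_from_finite)
    fix I :: "nat set" assume "finite I" "I \<subseteq> {1..}"
    then show "(\<Sum>n\<in>I. (cmod (g p lam al x n 1))\<^sup>2) \<le> CH1 p \<Omega> K" by (rule H1)
  qed simp
  have s0: "summable (\<lambda>n. (cmod (g p lam al x (Suc n) 0))\<^sup>2) \<and>
      (\<Sum>n. (cmod (g p lam al x (Suc n) 0))\<^sup>2) \<le> 2 * (Wc \<Omega> K)\<^sup>2 * \<Omega>\<^sup>2 + 2 * CH1 p \<Omega> K"
  proof (rule summable_from_finite)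
    fix I :: "nat set" assume I: "finite I" "I \<subseteq> {1..}"
    have "(\<Sum>n\<in>I. (cmod (g p lam al x n 0))\<^sup>2) \<le> (\<Sum>n\<in>I. 2 * (Wc \<Omega> K)\<^sup>2 * (xi p lam al n)\<^sup>2 + 2 * (cmod (g p lam al x n 1))\<^sup>2)"
    proof (rule sum_mono)
      fix n assume "n \<in> I" then have n: "n \<ge> 1" using I by auto
      have a: "cmod (h n) * Wc \<Omega> K \<le> xi p lam al n * Wc \<Omega> K"
        using W_nonneg by (intro mult_right_mono h_le_xi) auto
      have "(cmod (g p lam al x n 0))\<^sup>2 \<le> (xi p lam al n * Wc \<Omega> K + cmod (g p lam al x n 1))\<^sup>2"
        using g0_bnd[OF n] a by (intro power_mono) auto
      also have "... \<le> 2 * (xi p lam al n * Wc \<Omega> K)\<^sup>2 + 2 * (cmod (g p lam al x n 1))\<^sup>2"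
      proof -
        have "0 \<le> (xi p lam al n * Wc \<Omega> K - cmod (g p lam al x n 1))\<^sup>2" by simp
        then show ?thesis by (simp add: power2_eq_square algebra_simps)
      qed
      finally show "(cmod (g p lam al x n 0))\<^sup>2 \<le> 2 * (Wc \<Omega> K)\<^sup>2 * (xi p lam al n)\<^sup>2 + 2 * (cmod (g p lam al x n 1))\<^sup>2"
        by (simp add: power_mult_distrib algebra_simps)
    qed
    also have "... = 2 * (Wc \<Omega> K)\<^sup>2 * (\<Sum>n\<in>I. (xi p lam al n)\<^sup>2) + 2 * (\<Sum>n\<in>I. (cmod (g p lam al x n 1))\<^sup>2)"
      by (simp add: sum.distrib sum_distrib_left)
    also have "... \<le> 2 * (Wc \<Omega> K)\<^sup>2 * \<Omega>\<^sup>2 + 2 * CH1 p \<Omega> K"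
      using xi_psum1[OF I] H1[OF I] by (intro add_mono mult_left_mono) auto
    finally show "(\<Sum>n\<in>I. (cmod (g p lam al x n 0))\<^sup>2) \<le> 2 * (Wc \<Omega> K)\<^sup>2 * \<Omega>\<^sup>2 + 2 * CH1 p \<Omega> K" .
  qed simp
  have i01: "i = 0 \<or> i = 1" using i by auto
  show "summable (\<lambda>n. (cmod (g p lam al x (Suc n) i))\<^sup>2)" using i01 s0 s1 by (elim disjE) auto
  have c1: "sqrt (CH1 p \<Omega> K) \<le> Cfin p \<Omega> K" unfolding Cfin_def by (simp add: le_max_iff_disj)
  have c0: "sqrt (2 * (Wc \<Omega> K)\<^sup>2 * \<Omega>\<^sup>2 + 2 * CH1 p \<Omega> K) \<le> Cfin p \<Omega> K" unfolding Cfin_def by (simp add: le_max_iff_disj)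
  have a1: "sqrt (\<Sum>n. (cmod (g p lam al x (Suc n) 1))\<^sup>2) \<le> Cfin p \<Omega> K"
    using s1 c1 real_sqrt_le_mono order_trans by blast
  have a0: "sqrt (\<Sum>n. (cmod (g p lam al x (Suc n) 0))\<^sup>2) \<le> Cfin p \<Omega> K"
    using s0 c0 real_sqrt_le_mono order_trans by blast
  show "sqrt (\<Sum>n. (cmod (g p lam al x (Suc n) i))\<^sup>2) \<le> Cfin p \<Omega> K"
    using i01 a0 a1 by (elim disjE) simp_all
next
  have s: "summable (\<lambda>n. cmod (g p lam al x (Suc n) 0 - g p lam al x (Suc n) 1)) \<and>
     (\<Sum>n. cmod (g p lam al x (Suc n) 0 - g p lam al x (Suc n) 1)) \<le> CH2 p \<Omega> K"
  proof (rule summable_from_finite)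
    fix I :: "nat set" assume "finite I" "I \<subseteq> {1..}"
    then show "(\<Sum>n\<in>I. cmod (g p lam al x n 0 - g p lam al x n 1)) \<le> CH2 p \<Omega> K" by (rule H2)
  qed simp
  then show "summable (\<lambda>n. cmod (g p lam al x (Suc n) 0 - g p lam al x (Suc n) 1))" by simp
  show "(\<Sum>n. cmod (g p lam al x (Suc n) 0 - g p lam al x (Suc n) 1)) \<le> Cfin p \<Omega> K"
    using s unfolding Cfin_def by linarith
qed

end

theorem lemma3p5:
  fixes p :: nat and \<Omega> K :: real
  assumes "\<Omega> > 0" and "K > 0"
  shows "\<exists>C. \<forall>lam al. BOK p \<Omega> K lam al \<longrightarrow>
           (\<forall>x\<in>{0..pi}.
              (\<forall>n i. n \<ge> 1 \<longrightarrow> i \<le> 1 \<longrightarrow>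
                  cmod (psi p lam al x n i) \<le> C \<and>
                  summable (gterm p lam al x n i \<circ> Suc) \<and>
                  cmod (g p lam al x n i) \<le> C) \<and>
              (\<forall>i\<le>1. summable (\<lambda>n. (cmod (g p lam al x (Suc n) i))\<^sup>2) \<and>
                  sqrt (\<Sum>n. (cmod (g p lam al x (Suc n) i))\<^sup>2) \<le> C) \<and>
              summable (\<lambda>n. cmod (g p lam al x (Suc n) 0 - g p lam al x (Suc n) 1)) \<and>
              (\<Sum>n. cmod (g p lam al x (Suc n) 0 - g p lam al x (Suc n) 1)) \<le> C)"
proof (intro exI allI impI ballI)
  fix lam al x assume "BOK p \<Omega> K lam al" "x \<in> {0..pi}"
  then interpret lctx p \<Omega> K lam al x using assms by unfold_locales auto
  show "(\<forall>n i. n \<ge> 1 \<longrightarrow> i \<le> 1 \<longrightarrow>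
                  cmod (psi p lam al x n i) \<le> Cfin p \<Omega> K \<and>
                  summable (gterm p lam al x n i \<circ> Suc) \<and>
                  cmod (g p lam al x n i) \<le> Cfin p \<Omega> K) \<and>
              (\<forall>i\<le>1. summable (\<lambda>n. (cmod (g p lam al x (Suc n) i))\<^sup>2) \<and>
                  sqrt (\<Sum>n. (cmod (g p lam al x (Suc n) i))\<^sup>2) \<le> Cfin p \<Omega> K) \<and>
              summable (\<lambda>n. cmod (g p lam al x (Suc n) 0 - g p lam al x (Suc n) 1)) \<and>
              (\<Sum>n. cmod (g p lam al x (Suc n) 0 - g p lam al x (Suc n) 1)) \<le> Cfin p \<Omega> K"
    by (rule main_local)
qed

end
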